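(* Let $G_1,\dots,G_n$ be rooted graphs and let $G$ be the decorated path obtained from them, with path vertices $1,\dots,n$. If $\theta$ is a real number larger than the largest pole of $\alpha_1^G$, then for every $i\in\{1,\dots,n\}$ and every real $\lambda\ge\theta$, $\lambda$ is not a pole of $\alpha_i^{G_i}$.
   Context: Graphs are finite and simple. For a graph $H$, $\phi^H$ is the characteristic polynomial of its adjacency matrix, and for a vertex $i$, $\alpha_i^H=\phi^H/\phi^{H\setminus i}$ (rational function in $x$). A rooted graph is a graph with a distinguished root. The decorated path built from pairwise disjoint rooted graphs $G_1,\dots,G_n$ is obtained from the path on vertices $1,\dots,n$ ($i\sim i+1$) by identifying the root of $G_i$ with vertex $i$; $\alpha_i^{G_i}$ is taken at this root. *)

theory Defs
  imports "HOL-Combinatorics.Permutations" "HOL-Computational_Algebra.Polynomial"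
begin

definition simple_graph :: "'a set \<Rightarrow> ('a \<Rightarrow> 'a \<Rightarrow> bool) \<Rightarrow> bool" where
  "simple_graph V E \<longleftrightarrow> finite V \<and> (\<forall>u v. E u v \<longrightarrow> u \<in> V \<and> v \<in> V)
     \<and> (\<forall>u v. E u v \<longrightarrow> E v u) \<and> (\<forall>u. \<not> E u u)"

definition rooted_graph :: "'a set \<Rightarrow> ('a \<Rightarrow> 'a \<Rightarrow> bool) \<Rightarrow> 'a \<Rightarrow> bool" where
  "rooted_graph V E r \<longleftrightarrow> simple_graph V E \<and> r \<in> V"

definition adj :: "('a \<Rightarrow> 'a \<Rightarrow> bool) \<Rightarrow> 'a \<Rightarrow> 'a \<Rightarrow> real" where
  "adj E u v = (if E u v then 1 else 0)"

definition charpoly :: "'a set \<Rightarrow> ('a \<Rightarrow> 'a \<Rightarrow> bool) \<Rightarrow> real poly" where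
  "charpoly V E = (\<Sum>p | p permutes V. of_int (sign p) *
      (\<Prod>v\<in>V. (if p v = v then [:0, 1:] else 0) - [:adj E v (p v):]))"

text \<open>mu is a pole of the rational function p/q (orders of vanishing compared, i.e.
  after cancelling common factors the denominator vanishes at mu).\<close>
definition rat_pole :: "real poly \<Rightarrow> real poly \<Rightarrow> real \<Rightarrow> bool" where
  "rat_pole p q mu \<longleftrightarrow> p \<noteq> 0 \<and> q \<noteq> 0 \<and> order mu p < order mu q"

text \<open>mu is a pole of alpha_i^H = phi^H / phi^(H minus i).\<close>
definition alpha_pole :: "'a set \<Rightarrow> ('a \<Rightarrow> 'a \<Rightarrow> bool) \<Rightarrow> 'a \<Rightarrow> real \<Rightarrow> bool" where
  "alpha_pole V E i mu \<longleftrightarrow> rat_pole (charpoly V E) (charpoly (V - {i}) E) mu"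

text \<open>Decorated path from rooted graphs (V i, E i, r i), i = 1..n: the root r i plays
  the role of path vertex i, and r i ~ r (i+1) for 1 <= i < n.\<close>
definition dpath_V :: "nat \<Rightarrow> (nat \<Rightarrow> 'a set) \<Rightarrow> 'a set" where
  "dpath_V n V = (\<Union>i\<in>{1..n}. V i)"

definition dpath_E :: "nat \<Rightarrow> (nat \<Rightarrow> 'a \<Rightarrow> 'a \<Rightarrow> bool) \<Rightarrow> (nat \<Rightarrow> 'a) \<Rightarrow> 'a \<Rightarrow> 'a \<Rightarrow> bool" where
  "dpath_E n E r u v \<longleftrightarrow> (\<exists>i\<in>{1..n}. E i u v)
     \<or> (\<exists>i. 1 \<le> i \<and> i < n \<and> ((u = r i \<and> v = r (Suc i)) \<or> (u = r (Suc i) \<and> v = r i)))"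

end

theory Submission
  imports Defs "Jordan_Normal_Form.Char_Poly" "HOL-Computational_Algebra.Field_as_Ring"
    "HOL-Computational_Algebra.Polynomial_Factorial"
begin

definition detS :: "'a set \<Rightarrow> ('a \<Rightarrow> 'a \<Rightarrow> 'r::comm_ring_1) \<Rightarrow> 'r" where
  "detS S M = (\<Sum>p | p permutes S. of_int (sign p) * (\<Prod>u\<in>S. M u (p u)))"

definition cpm :: "('a \<Rightarrow> 'a \<Rightarrow> bool) \<Rightarrow> 'a \<Rightarrow> 'a \<Rightarrow> real poly" where
  "cpm E u w = (if w = u then [:0, 1:] else 0) - [:adj E u w:]"

lemma charpoly_detS: "charpoly V E = detS V (cpm E)"
  unfolding charpoly_def detS_def cpm_def by simp

lemma detS_cong:
  assumes "\<And>u w. u \<in> S \<Longrightarrow> w \<in> S \<Longrightarrow> M u w = M' u w"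
  shows "detS S M = detS S M'"
  unfolding detS_def
proof (rule sum.cong[OF refl])
  fix p assume "p \<in> {p. p permutes S}"
  then have "p permutes S" by simp
  then show "of_int (sign p) * (\<Prod>u\<in>S. M u (p u)) = of_int (sign p) * (\<Prod>u\<in>S. M' u (p u))"
    using assms by (auto intro!: prod.cong simp: permutes_in_image)
qed

lemma detS_mat:
  fixes M :: "'a \<Rightarrow> 'a \<Rightarrow> 'r::comm_ring_1"
  assumes g: "bij_betw g {0..<m} S"
  shows "detS S M = det (mat m m (\<lambda>(i,j). M (g i) (g j)))"
proof -
  have fin: "finite {0..<m}" by simp
  have inj: "inj_on g {0..<m}" using g by (simp add: bij_betw_def)
  let ?h = "map_permutation {0..<m} g"
  let ?h' = "map_permutation S (inv_into {0..<m} g)"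
  have gi: "bij_betw (inv_into {0..<m} g) S {0..<m}" using g by (rule bij_betw_inv_into)
  have bij: "bij_betw ?h {q. q permutes {0..<m}} {p. p permutes S}"
  proof (rule bij_betw_byWitness[where f' = ?h'])
    show "\<forall>a\<in>{q. q permutes {0..<m}}. ?h' (?h a) = a"
      using map_permutation_compose_inv[OF g] inv_into_f_f[OF inj] by auto
    show "\<forall>a\<in>{p. p permutes S}. ?h (?h' a) = a"
      using map_permutation_compose_inv[OF gi] g by (auto simp: bij_betw_inv_into_right)
    show "?h ` {q. q permutes {0..<m}} \<subseteq> {p. p permutes S}"
      using map_permutation_permutes[OF g] by auto
    show "?h' ` {p. p permutes S} \<subseteq> {q. q permutes {0..<m}}"
      using map_permutation_permutes[OF gi] by auto
  qed
  have "detS S M = (\<Sum>q\<in>{q. q permutes {0..<m}}. of_int (sign (?h q)) * (\<Prod>u\<in>S. M u (?h q u)))"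
    unfolding detS_def by (rule sum.reindex_bij_betw[OF bij, symmetric])
  also have "\<dots> = (\<Sum>q\<in>{q. q permutes {0..<m}}. signof q * (\<Prod>i=0..<m. mat m m (\<lambda>(i,j). M (g i) (g j)) $$ (i, q i)))"
  proof (rule sum.cong[OF refl])
    fix q assume "q \<in> {q. q permutes {0..<m}}"
    then have q: "q permutes {0..<m}" by simp
    have s: "sign (?h q) = sign q" by (rule sign_map_permutation[OF inj q fin])
    have "(\<Prod>u\<in>S. M u (?h q u)) = (\<Prod>i\<in>{0..<m}. M (g i) (?h q (g i)))"
      by (rule prod.reindex_bij_betw[OF g, symmetric])
    also have "\<dots> = (\<Prod>i=0..<m. mat m m (\<lambda>(i,j). M (g i) (g j)) $$ (i, q i))"
    proof (rule prod.cong[OF refl])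
      fix i assume i: "i \<in> {0..<m}"
      then have "q i \<in> {0..<m}" using q by (simp add: permutes_in_image)
      then show "M (g i) (?h q (g i)) = mat m m (\<lambda>(i,j). M (g i) (g j)) $$ (i, q i)"
        using i by (simp add: map_permutation_apply[OF inj])
    qed
    finally show "of_int (sign (?h q)) * (\<Prod>u\<in>S. M u (?h q u)) = signof q * (\<Prod>i=0..<m. mat m m (\<lambda>(i,j). M (g i) (g j)) $$ (i, q i))"
      using s by simp
  qed
  also have "\<dots> = det (mat m m (\<lambda>(i,j). M (g i) (g j)))"
    by (rule det_def'[symmetric]) simp
  finally show ?thesis .
qed

lemma detS_split:
  fixes M :: "'a \<Rightarrow> 'a \<Rightarrow> 'r::comm_ring_1"
  assumes fin1: "finite V1" and fin2: "finite V2" and disj: "V1 \<inter> V2 = {}"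
  shows "(\<Sum>p | p permutes (V1 \<union> V2) \<and> p ` V1 = V1. of_int (sign p) * (\<Prod>u\<in>V1 \<union> V2. M u (p u)))
         = detS V1 M * detS V2 M"
proof -
  let ?P1 = "{p. p permutes V1}" and ?P2 = "{p. p permutes V2}"
  let ?T = "{p. p permutes (V1 \<union> V2) \<and> p ` V1 = V1}"
  let ?f1 = "\<lambda>p. of_int (sign p) * (\<Prod>u\<in>V1. M u (p u)) :: 'r"
  let ?f2 = "\<lambda>p. of_int (sign p) * (\<Prod>u\<in>V2. M u (p u)) :: 'r"
  let ?h = "\<lambda>(p1::'a\<Rightarrow>'a, p2::'a\<Rightarrow>'a). p1 \<circ> p2"
  have key1: "restrict_id (p1 \<circ> p2) V1 = p1" "restrict_id (p1 \<circ> p2) V2 = p2"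
    if "p1 permutes V1" "p2 permutes V2" for p1 p2
  proof -
    show "restrict_id (p1 \<circ> p2) V1 = p1"
    proof
      fix x
      have "x \<in> V1 \<Longrightarrow> p2 x = x" using that(2) disj by (meson disjoint_iff permutes_not_in)
      then show "restrict_id (p1 \<circ> p2) V1 x = p1 x"
        using that disj by (cases "x \<in> V1") (auto simp: permutes_not_in)
    qed
    show "restrict_id (p1 \<circ> p2) V2 = p2"
    proof
      fix x show "restrict_id (p1 \<circ> p2) V2 x = p2 x"
      proof (cases "x \<in> V2")
        case True
        then have "p2 x \<in> V2" using that(2) by (simp add: permutes_in_image)
        then have "p2 x \<notin> V1" using disj by auto
        then show ?thesis using True that(1) by (simp add: permutes_not_in)
      next
        case False
        then show ?thesis using that(2) by (simp add: permutes_not_in)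
      qed
    qed
  qed
  have inT: "p1 \<circ> p2 \<in> ?T" if "p1 permutes V1" "p2 permutes V2" for p1 p2
  proof -
    have "p1 permutes V1 \<union> V2" "p2 permutes V1 \<union> V2"
      using that permutes_subset by blast+
    then have "p1 \<circ> p2 permutes V1 \<union> V2" by (rule permutes_compose[rotated])
    moreover have "(p1 \<circ> p2) ` V1 = V1"
    proof -
      have "\<And>x. x \<in> V1 \<Longrightarrow> p2 x = x" using that(2) disj by (meson disjoint_iff permutes_not_in)
      then have "p2 ` V1 = V1" by simp
      then show ?thesis using that(1) by (metis image_comp permutes_image)
    qed
    ultimately show ?thesis by simp
  qed
  have bk: "restrict_id p V1 permutes V1 \<and> restrict_id p V2 permutes V2 \<and> restrict_id p V1 \<circ> restrict_id p V2 = p"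
    if "p \<in> ?T" for p
  proof -
    have p: "p permutes V1 \<union> V2" "p ` V1 = V1" using that by auto
    have inj: "inj_on p (V1 \<union> V2)" using p(1) by (simp add: permutes_inj_on)
    have im: "p ` (V1 \<union> V2) = V1 \<union> V2" using p(1) by (simp add: permutes_image)
    have im2: "p ` V2 = V2"
    proof -
      have d: "p ` V2 \<inter> p ` V1 = {}" using inj_on_image_Int[OF inj, of V2 V1] disj by (simp add: Int_commute)
      have u: "V1 \<union> V2 = V1 \<union> p ` V2" using im p(2) by (simp add: image_Un)
      show ?thesis
      proof
        show "p ` V2 \<subseteq> V2"
        proof
          fix y assume y: "y \<in> p ` V2"
          then have "y \<in> V1 \<union> V2" using u by (metis UnI2)
          moreover have "y \<notin> V1" using d p(2) y by (metis IntI empty_iff)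
          ultimately show "y \<in> V2" by (metis UnE)
        qed
        show "V2 \<subseteq> p ` V2"
        proof
          fix y assume y: "y \<in> V2"
          then have "y \<in> V1 \<union> p ` V2" using u by (metis UnI2)
          moreover have "y \<notin> V1" using disj y by (metis IntI empty_iff)
          ultimately show "y \<in> p ` V2" by (metis UnE)
        qed
      qed
    qed
    have b1: "bij_betw p V1 V1" unfolding bij_betw_def using inj_on_subset[OF inj, of V1] p(2) by simp
    have b2: "bij_betw p V2 V2" unfolding bij_betw_def using inj_on_subset[OF inj, of V2] im2 by simp
    have c: "restrict_id p V1 \<circ> restrict_id p V2 = p"
    proof
      fix x show "(restrict_id p V1 \<circ> restrict_id p V2) x = p x"
      proof (cases "x \<in> V2")
        case True
        then have "p x \<in> V2" using im2 by auto
        then have "p x \<notin> V1" using disj by auto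
        then show ?thesis using True by simp
      next
        case False
        then show ?thesis using p(1) by (cases "x \<in> V1") (auto simp: permutes_not_in)
      qed
    qed
    show ?thesis using permutes_restrict_id[OF b1] permutes_restrict_id[OF b2] c by simp
  qed
  have bij: "bij_betw ?h (?P1 \<times> ?P2) ?T"
  proof (rule bij_betw_byWitness[where f' = "\<lambda>p. (restrict_id p V1, restrict_id p V2)"])
    show "\<forall>a\<in>?P1 \<times> ?P2. (restrict_id (?h a) V1, restrict_id (?h a) V2) = a"
      using key1 by auto
    show "\<forall>a\<in>?T. ?h (restrict_id a V1, restrict_id a V2) = a"
      using bk by auto
    show "?h ` (?P1 \<times> ?P2) \<subseteq> ?T"
    proof
      fix y assume "y \<in> ?h ` (?P1 \<times> ?P2)"
      then obtain p1 p2 where "y = p1 \<circ> p2" "p1 permutes V1" "p2 permutes V2" by auto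
      then show "y \<in> ?T" using inT by blast
    qed
    show "(\<lambda>p. (restrict_id p V1, restrict_id p V2)) ` ?T \<subseteq> ?P1 \<times> ?P2"
      using bk by auto
  qed
  have "detS V1 M * detS V2 M = (\<Sum>p1\<in>?P1. \<Sum>p2\<in>?P2. ?f1 p1 * ?f2 p2)"
    unfolding detS_def by (simp add: sum_product)
  also have "\<dots> = (\<Sum>(p1,p2)\<in>?P1 \<times> ?P2. ?f1 p1 * ?f2 p2)"
    by (simp add: sum.cartesian_product)
  also have "\<dots> = (\<Sum>x\<in>?P1 \<times> ?P2. of_int (sign (?h x)) * (\<Prod>u\<in>V1 \<union> V2. M u (?h x u)))"
  proof (rule sum.cong[OF refl])
    fix x assume "x \<in> ?P1 \<times> ?P2"
    then obtain p1 p2 where x: "x = (p1, p2)" and p1: "p1 permutes V1" and p2: "p2 permutes V2" by auto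
    have s: "sign (p1 \<circ> p2) = sign p1 * sign p2"
      using sign_compose permutes_imp_permutation fin1 fin2 p1 p2 by blast
    have "(\<Prod>u\<in>V1 \<union> V2. M u ((p1 \<circ> p2) u)) = (\<Prod>u\<in>V1. M u ((p1 \<circ> p2) u)) * (\<Prod>u\<in>V2. M u ((p1 \<circ> p2) u))"
      using fin1 fin2 disj by (simp add: prod.union_disjoint)
    also have "(\<Prod>u\<in>V1. M u ((p1 \<circ> p2) u)) = (\<Prod>u\<in>V1. M u (p1 u))"
      using key1(1)[OF p1 p2] by (intro prod.cong refl) (metis restrict_id_simps(1))
    also have "(\<Prod>u\<in>V2. M u ((p1 \<circ> p2) u)) = (\<Prod>u\<in>V2. M u (p2 u))"
      using key1(2)[OF p1 p2] by (intro prod.cong refl) (metis restrict_id_simps(1))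
    finally show "(case x of (p1, p2) \<Rightarrow> ?f1 p1 * ?f2 p2) = of_int (sign (?h x)) * (\<Prod>u\<in>V1 \<union> V2. M u (?h x u))"
      using x s by (simp add: algebra_simps)
  qed
  also have "\<dots> = (\<Sum>p\<in>?T. of_int (sign p) * (\<Prod>u\<in>V1 \<union> V2. M u (p u)))"
    by (rule sum.reindex_bij_betw[OF bij])
  finally show ?thesis by simp
qed

lemma permutes_fix_diff:
  assumes "p permutes S" "\<And>x. x \<in> X \<Longrightarrow> p x = x"
  shows "p permutes (S - X)"
  using assms unfolding permutes_def by (metis DiffI)

lemma detS_bridge:
  fixes M :: "'a \<Rightarrow> 'a \<Rightarrow> 'r::comm_ring_1"
  assumes fin1: "finite V1" and fin2: "finite V2" and disj: "V1 \<inter> V2 = {}"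
    and a: "a \<in> V1" and b: "b \<in> V2"
    and z1: "\<And>u w. u \<in> V1 \<Longrightarrow> w \<in> V2 \<Longrightarrow> (u, w) \<noteq> (a, b) \<Longrightarrow> M u w = 0"
    and z2: "\<And>u w. u \<in> V2 \<Longrightarrow> w \<in> V1 \<Longrightarrow> (u, w) \<noteq> (b, a) \<Longrightarrow> M u w = 0"
  shows "detS (V1 \<union> V2) M = detS V1 M * detS V2 M - M a b * M b a * detS (V1 - {a}) M * detS (V2 - {b}) M"
proof -
  define S where "S = V1 \<union> V2"
  have finS: "finite S" using fin1 fin2 S_def by simp
  have ab: "a \<noteq> b" using a b disj by auto
  let ?f = "\<lambda>p. of_int (sign p) * (\<Prod>u\<in>S. M u (p u)) :: 'r"
  define P where "P = {p. p permutes S}"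
  define T where "T = {p. p permutes S \<and> p ` V1 = V1}"
  define B where "B = {p. p permutes S \<and> p a = b \<and> p b = a \<and> p ` (V1 - {a}) = V1 - {a}}"
  define T' where "T' = {q. q permutes (V1 - {a}) \<union> (V2 - {b}) \<and> q ` (V1 - {a}) = V1 - {a}}"
  have finP: "finite P" unfolding P_def using finS by (rule finite_permutations)
  have TP: "T \<subseteq> P" unfolding T_def P_def by blast
  have BP: "B \<subseteq> P - T"
  proof
    fix p assume p: "p \<in> B"
    then have "p a = b" unfolding B_def by simp
    then have "p ` V1 \<noteq> V1" using a b disj by (metis IntI empty_iff imageI)
    then show "p \<in> P - T" using p unfolding B_def P_def T_def by simp
  qed
  have rest0: "?f p = 0" if p: "p \<in> P - T - B" for p
  proof -
    have pS: "p permutes S" using p unfolding P_def by simp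
    have inj: "inj_on p S" using pS by (simp add: permutes_inj_on)
    have pin: "p u \<in> S" if "u \<in> S" for u using pS that by (simp add: permutes_in_image)
    have "\<exists>u\<in>S. M u (p u) = 0"
    proof (rule ccontr)
      assume "\<not> ?thesis"
      then have nz: "M u (p u) \<noteq> 0" if "u \<in> S" for u using that by blast
      have i1: "p u \<in> V1" if "u \<in> V1" "u \<noteq> a" for u
      proof (rule ccontr)
        assume "p u \<notin> V1"
        then have "p u \<in> V2" using pin[of u] that S_def by simp
        then show False using z1[of u "p u"] nz[of u] that S_def by simp
      qed
      have i2: "p u \<in> V2" if "u \<in> V2" "u \<noteq> b" for u
      proof (rule ccontr)
        assume "p u \<notin> V2"
        then have "p u \<in> V1" using pin[of u] that S_def by simp
        then show False using z2[of u "p u"] nz[of u] that S_def by simp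
      qed
      show False
      proof (cases "p a \<in> V1")
        case True
        have "p ` V1 \<subseteq> V1"
        proof
          fix y assume "y \<in> p ` V1"
          then obtain u where u: "u \<in> V1" "y = p u" by blast
          then show "y \<in> V1" using i1[of u] True by (cases "u = a") auto
        qed
        then have "p ` V1 = V1"
          using endo_inj_surj[OF fin1] inj_on_subset[OF inj] S_def by simp
        then show False using p pS unfolding T_def by simp
      next
        case False
        then have "p a \<in> V2" using pin[of a] a S_def by simp
        then have pa: "p a = b" using z1[of a "p a"] nz[of a] a S_def by auto
        have pb1: "p b \<in> V1"
        proof (rule ccontr)
          assume pb: "p b \<notin> V1"
          have "p ` V2 \<subseteq> V2"
          proof
            fix y assume "y \<in> p ` V2"
            then obtain u where u: "u \<in> V2" "y = p u" by blast
            then show "y \<in> V2" using i2[of u] pb pin[of b] b S_def by (cases "u = b") auto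
          qed
          then have "p ` V2 = V2"
            using endo_inj_surj[OF fin2] inj_on_subset[OF inj] S_def by simp
          then obtain w where w: "w \<in> V2" "p w = b" using b by (metis imageE)
          then have "w = a" using pa inj a S_def unfolding inj_on_def by (metis UnI1 UnI2)
          then show False using w a disj by auto
        qed
        then have pb: "p b = a" using z2[of b "p b"] nz[of b] b S_def by auto
        have sub: "p ` (V1 - {a}) \<subseteq> V1 - {a}"
        proof
          fix y assume "y \<in> p ` (V1 - {a})"
          then obtain u where u: "u \<in> V1" "u \<noteq> a" "y = p u" by blast
          have "p u \<noteq> a"
          proof
            assume "p u = a"
            then have "u = b" using pb inj u b S_def unfolding inj_on_def by (metis UnI1 UnI2)
            then show False using u b disj by auto
          qed
          then show "y \<in> V1 - {a}" using i1[of u] u by simp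
        qed
        have "inj_on p (V1 - {a})" using inj_on_subset[OF inj] S_def by auto
        then have "p ` (V1 - {a}) = V1 - {a}"
          using endo_inj_surj[of "V1 - {a}" p] fin1 sub by simp
        then show False using p pS pa pb unfolding B_def by simp
      qed
    qed
    then have "(\<Prod>u\<in>S. M u (p u)) = 0" by (rule prod_zero[OF finS])
    then show ?thesis by simp
  qed
  have sumT: "sum ?f T = detS V1 M * detS V2 M"
    unfolding T_def S_def using detS_split[OF fin1 fin2 disj, of M] by simp
  have S': "(V1 - {a}) \<union> (V2 - {b}) = S - {a, b}" unfolding S_def using a b disj by auto
  have bijB: "bij_betw (\<lambda>q. Transposition.transpose a b \<circ> q) T' B"
  proof (rule bij_betw_byWitness[where f' = "\<lambda>q. Transposition.transpose a b \<circ> q"])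
    show "\<forall>q\<in>T'. Transposition.transpose a b \<circ> (Transposition.transpose a b \<circ> q) = q"
      by (simp add: fun_eq_iff)
    show "\<forall>q\<in>B. Transposition.transpose a b \<circ> (Transposition.transpose a b \<circ> q) = q"
      by (simp add: fun_eq_iff)
    show "(\<lambda>q. Transposition.transpose a b \<circ> q) ` T' \<subseteq> B"
    proof
      fix y assume "y \<in> (\<lambda>q. Transposition.transpose a b \<circ> q) ` T'"
      then obtain q where y: "y = Transposition.transpose a b \<circ> q" and q: "q \<in> T'" by blast
      have q1: "q permutes S - {a, b}" and q2: "q ` (V1 - {a}) = V1 - {a}"
        using q S' unfolding T'_def by auto
      have qS: "q permutes S" using q1 permutes_subset by blast
      have qa: "q a = a" "q b = b" using q1 by (auto simp: permutes_not_in)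
      have tS: "Transposition.transpose a b permutes S" using a b S_def by (simp add: permutes_swap_id)
      have "y permutes S" unfolding y by (rule permutes_compose[OF qS tS])
      moreover have "y a = b" "y b = a" using qa y by auto
      moreover have "y ` (V1 - {a}) = V1 - {a}"
      proof -
        have "y ` (V1 - {a}) = Transposition.transpose a b ` (V1 - {a})" unfolding y
          by (metis image_comp q2)
        also have "\<dots> = V1 - {a}"
        proof (rule image_cong[where g = id, simplified])
          show "\<And>x. x \<in> V1 - {a} \<Longrightarrow> Transposition.transpose a b x = x"
            using b disj by (auto simp: transpose_def)
        qed simp
        finally show ?thesis .
      qed
      ultimately show "y \<in> B" unfolding B_def by simp
    qed
    show "(\<lambda>q. Transposition.transpose a b \<circ> q) ` B \<subseteq> T'"
    proof
      fix y assume "y \<in> (\<lambda>q. Transposition.transpose a b \<circ> q) ` B"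
      then obtain p where y: "y = Transposition.transpose a b \<circ> p" and p: "p \<in> B" by blast
      have pS: "p permutes S" and pa: "p a = b" "p b = a" and p2: "p ` (V1 - {a}) = V1 - {a}"
        using p unfolding B_def by auto
      have tS: "Transposition.transpose a b permutes S" using a b S_def by (simp add: permutes_swap_id)
      have "y permutes S" unfolding y by (rule permutes_compose[OF pS tS])
      moreover have "\<And>x. x \<in> {a, b} \<Longrightarrow> y x = x" using pa y by auto
      ultimately have "y permutes S - {a, b}" by (rule permutes_fix_diff)
      moreover have "y ` (V1 - {a}) = V1 - {a}"
      proof -
        have "y ` (V1 - {a}) = Transposition.transpose a b ` (V1 - {a})" unfolding y
          by (metis image_comp p2)
        also have "\<dots> = V1 - {a}"
        proof (rule image_cong[where g = id, simplified])
          show "\<And>x. x \<in> V1 - {a} \<Longrightarrow> Transposition.transpose a b x = x"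
            using b disj by (auto simp: transpose_def)
        qed simp
        finally show ?thesis .
      qed
      ultimately show "y \<in> T'" unfolding T'_def using S' by simp
    qed
  qed
  have sumB: "sum ?f B = - (M a b * M b a * (detS (V1 - {a}) M * detS (V2 - {b}) M))"
  proof -
    have "sum ?f B = (\<Sum>q\<in>T'. ?f (Transposition.transpose a b \<circ> q))"
      by (rule sum.reindex_bij_betw[OF bijB, symmetric])
    also have "\<dots> = (\<Sum>q\<in>T'. - (M a b * M b a * (of_int (sign q) * (\<Prod>u\<in>(V1 - {a}) \<union> (V2 - {b}). M u (q u)))))"
    proof (rule sum.cong[OF refl])
      fix q assume q: "q \<in> T'"
      have q1: "q permutes S - {a, b}"
        using q S' unfolding T'_def by auto
      have qS: "q permutes S" using q1 permutes_subset by blast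
      have qa: "q a = a" "q b = b" using q1 by (auto simp: permutes_not_in)
      have sg: "sign (Transposition.transpose a b \<circ> q) = - sign q"
        using sign_compose[OF permutation_swap_id permutes_imp_permutation[OF finS qS], of a b]
          ab by (simp add: sign_swap_id)
      have fS: "finite (S - {a, b})" using finS by simp
      have "(\<Prod>u\<in>S. M u ((Transposition.transpose a b \<circ> q) u))
          = M a b * M b a * (\<Prod>u\<in>S - {a, b}. M u ((Transposition.transpose a b \<circ> q) u))"
      proof -
        have Sd: "S = insert a (insert b (S - {a, b}))" using a b S_def by auto
        have "(\<Prod>u\<in>S. M u ((Transposition.transpose a b \<circ> q) u))
            = (\<Prod>u\<in>insert a (insert b (S - {a, b})). M u ((Transposition.transpose a b \<circ> q) u))"
          using Sd by simp
        also have "\<dots> = M a b * (M b a * (\<Prod>u\<in>S - {a, b}. M u ((Transposition.transpose a b \<circ> q) u)))"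
          using fS ab qa by simp
        finally show ?thesis by (simp add: mult.assoc)
      qed
      also have "(\<Prod>u\<in>S - {a, b}. M u ((Transposition.transpose a b \<circ> q) u)) = (\<Prod>u\<in>S - {a, b}. M u (q u))"
      proof (rule prod.cong[OF refl])
        fix u assume u: "u \<in> S - {a, b}"
        then have "q u \<in> S - {a, b}" by (simp only: permutes_in_image[OF q1])
        then show "M u ((Transposition.transpose a b \<circ> q) u) = M u (q u)" by (auto simp: transpose_def)
      qed
      finally show "?f (Transposition.transpose a b \<circ> q) = - (M a b * M b a * (of_int (sign q) * (\<Prod>u\<in>(V1 - {a}) \<union> (V2 - {b}). M u (q u))))"
        using sg S' by (simp add: algebra_simps)
    qed
    also have "\<dots> = - (M a b * M b a * (\<Sum>q\<in>T'. of_int (sign q) * (\<Prod>u\<in>(V1 - {a}) \<union> (V2 - {b}). M u (q u))))"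
      by (simp add: sum_negf sum_distrib_left)
    also have "(\<Sum>q\<in>T'. of_int (sign q) * (\<Prod>u\<in>(V1 - {a}) \<union> (V2 - {b}). M u (q u))) = detS (V1 - {a}) M * detS (V2 - {b}) M"
      unfolding T'_def using detS_split[of "V1 - {a}" "V2 - {b}" M] fin1 fin2 disj by auto
    finally show ?thesis .
  qed
  have "detS S M = sum ?f P" unfolding detS_def P_def by simp
  also have "\<dots> = sum ?f (P - T) + sum ?f T" by (rule sum.subset_diff[OF TP finP])
  also have "sum ?f (P - T) = sum ?f (P - T - B) + sum ?f B"
    by (rule sum.subset_diff[OF BP]) (use finP in simp)
  also have "sum ?f (P - T - B) = 0" using rest0 by simp
  finally show ?thesis using sumT sumB S_def by (simp add: algebra_simps)
qed

definition Nm :: "real mat \<Rightarrow> nat \<Rightarrow> real \<Rightarrow> real mat" where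
  "Nm A n y = mat n n (\<lambda>(i,j). (if i = j then y else 0) - A $$ (i,j))"

lemma isCont_det:
  fixes F :: "real \<Rightarrow> real mat"
  assumes cont: "\<And>i j. i < m \<Longrightarrow> j < m \<Longrightarrow> isCont (\<lambda>y. F y $$ (i,j)) x"
      and car: "\<And>y. F y \<in> carrier_mat m m"
  shows "isCont (\<lambda>y. det (F y)) x"
proof -
  have eq: "(\<lambda>y. det (F y)) = (\<lambda>y. \<Sum>p\<in>{p. p permutes {0..<m}}. signof p * (\<Prod>i=0..<m. F y $$ (i, p i)))"
    using det_def'[OF car] by (intro ext) simp
  show ?thesis unfolding eq
  proof (intro continuous_sum continuous_mult continuous_const continuous_prod)
    fix p i assume p: "p \<in> {p. p permutes {0..<m}}" and i: "i \<in> {0..<m}"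
    then have "p i < m" by (simp add: permutes_in_image)
    then show "isCont (\<lambda>y. F y $$ (i, p i)) x" using cont i by simp
  qed
qed

lemma eventually_poly_nz:
  fixes p :: "real poly"
  assumes "p \<noteq> 0"
  shows "eventually (\<lambda>y. poly p y \<noteq> 0) (at x)"
proof -
  have fin: "finite {z. poly p z = 0}" using poly_roots_finite[OF assms] .
  have "\<forall>z\<in>{z. poly p z = 0}. eventually (\<lambda>y. y \<noteq> z) (at x)"
  proof
    fix z :: real
    show "eventually (\<lambda>y. y \<noteq> z) (at x)"
    proof (cases "z = x")
      case True then show ?thesis by (simp add: eventually_at_filter)
    next
      case False
      have "eventually (\<lambda>y. y \<in> - {z}) (nhds x)"
        by (rule eventually_nhds_in_open) (use False in auto)
      then have "eventually (\<lambda>y. y \<noteq> z) (nhds x)" by simp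
      then show ?thesis unfolding eventually_at_filter by (rule eventually_mono) auto
    qed
  qed
  then have "eventually (\<lambda>y. \<forall>z\<in>{z. poly p z = 0}. y \<noteq> z) (at x)"
    by (rule eventually_ball_finite[OF fin])
  then show ?thesis by (rule eventually_mono) auto
qed

lemma Nm_carrier[simp]: "Nm A n y \<in> carrier_mat n n"
  unfolding Nm_def by simp

lemma Nm_dim[simp]: "dim_row (Nm A n y) = n" "dim_col (Nm A n y) = n"
  unfolding Nm_def by simp_all

lemma Nm_index[simp]: "i < n \<Longrightarrow> j < n \<Longrightarrow> Nm A n y $$ (i,j) = (if i = j then y else 0) - A $$ (i,j)"
  unfolding Nm_def by simp

lemma isCont_cofactor_Nm:
  assumes "k < n" "i < n"
  shows "isCont (\<lambda>y. cofactor (Nm A n y) k i) x"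
proof -
  have "isCont (\<lambda>y. det (mat_delete (Nm A n y) k i)) x"
  proof (rule isCont_det[where m = "n - 1"])
    fix a b assume a: "a < n - 1" and b: "b < n - 1"
    define a' where "a' = (if a < k then a else Suc a)"
    define b' where "b' = (if b < i then b else Suc b)"
    have a'n: "a' < n" and b'n: "b' < n" using a b unfolding a'_def b'_def by auto
    have eq: "(\<lambda>y. mat_delete (Nm A n y) k i $$ (a, b)) = (\<lambda>y. (if a' = b' then y else 0) - A $$ (a', b'))"
      using a b a'n b'n unfolding mat_delete_def a'_def b'_def by (intro ext) simp
    show "isCont (\<lambda>y. mat_delete (Nm A n y) k i $$ (a, b)) x"
      unfolding eq by (cases "a' = b'") simp_all
  next
    fix y show "mat_delete (Nm A n y) k i \<in> carrier_mat (n - 1) (n - 1)"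
      by (rule mat_delete_carrier) simp
  qed
  then show ?thesis unfolding cofactor_def by (intro continuous_intros)
qed

lemma isCont_det_Nm: "isCont (\<lambda>y. det (Nm A n y)) x"
proof (rule isCont_det[where m = n])
  fix a b assume a: "a < n" and b: "b < n"
  have eq: "(\<lambda>y. Nm A n y $$ (a, b)) = (\<lambda>y. (if a = b then y else 0) - A $$ (a, b))"
    using a b by (intro ext) simp
  show "isCont (\<lambda>y. Nm A n y $$ (a, b)) x"
    unfolding eq by (cases "a = b") simp_all
qed simp

lemma cramer_Nm:
  assumes "det (Nm A n y) \<noteq> 0" "i < n" "k < n"
  shows "(\<Sum>j<n. Nm A n y $$ (i,j) * (cofactor (Nm A n y) k j / det (Nm A n y))) = (if i = k then 1 else 0)"
proof -
  let ?N = "Nm A n y"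
  have "(?N * adj_mat ?N) $$ (i, k) = (det ?N \<cdot>\<^sub>m 1\<^sub>m n) $$ (i, k)"
    using adj_mat(2)[OF Nm_carrier] by simp
  moreover have "(?N * adj_mat ?N) $$ (i, k) = (\<Sum>j<n. ?N $$ (i,j) * cofactor ?N k j)"
    using assms unfolding adj_mat_def
    by (simp add: scalar_prod_def atLeast0LessThan Nm_def)
  moreover have "(det ?N \<cdot>\<^sub>m 1\<^sub>m n) $$ (i, k) = det ?N * (if i = k then 1 else 0)"
    using assms by simp
  ultimately have "(\<Sum>j<n. ?N $$ (i,j) * cofactor ?N k j) = det ?N * (if i = k then 1 else 0)"
    by simp
  then have "(\<Sum>j<n. ?N $$ (i,j) * cofactor ?N k j) / det ?N = (if i = k then 1 else 0)"
    using assms(1) by simp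
  then show ?thesis by (simp add: sum_divide_distrib)
qed

lemma resolvent_identity:
  assumes sym: "\<And>i j. i < n \<Longrightarrow> j < n \<Longrightarrow> A $$ (i,j) = A $$ (j,i)"
    and k: "k < n" and dx: "det (Nm A n x) \<noteq> 0" and dy: "det (Nm A n y) \<noteq> 0"
  shows "cofactor (Nm A n y) k k / det (Nm A n y) - cofactor (Nm A n x) k k / det (Nm A n x)
    = (x - y) * (\<Sum>i<n. (cofactor (Nm A n x) k i / det (Nm A n x)) * (cofactor (Nm A n y) k i / det (Nm A n y)))"
proof -
  define u where "u z i = cofactor (Nm A n z) k i / det (Nm A n z)" for z i
  have cx: "(\<Sum>j<n. Nm A n x $$ (i,j) * u x j) = (if i = k then 1 else 0)" if "i < n" for i
    unfolding u_def by (rule cramer_Nm[OF dx that k])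
  have cy: "(\<Sum>j<n. Nm A n y $$ (i,j) * u y j) = (if i = k then 1 else 0)" if "i < n" for i
    unfolding u_def by (rule cramer_Nm[OF dy that k])
  have e1: "u y k = (\<Sum>i<n. \<Sum>j<n. Nm A n x $$ (i,j) * u x j * u y i)"
  proof -
    have "(\<Sum>i<n. \<Sum>j<n. Nm A n x $$ (i,j) * u x j * u y i) = (\<Sum>i<n. (\<Sum>j<n. Nm A n x $$ (i,j) * u x j) * u y i)"
      by (simp add: sum_distrib_right)
    also have "\<dots> = (\<Sum>i<n. (if i = k then u y i else 0))"
      by (rule sum.cong[OF refl]) (use cx in simp)
    also have "\<dots> = u y k" using k by simp
    finally show ?thesis by simp
  qed
  have e2: "u x k = (\<Sum>i<n. \<Sum>j<n. Nm A n y $$ (i,j) * u x j * u y i)"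
  proof -
    have "(\<Sum>i<n. \<Sum>j<n. Nm A n y $$ (i,j) * u x j * u y i) = (\<Sum>j<n. \<Sum>i<n. Nm A n y $$ (i,j) * u x j * u y i)"
      by (rule sum.swap)
    also have "\<dots> = (\<Sum>j<n. (\<Sum>i<n. Nm A n y $$ (j,i) * u y i) * u x j)"
    proof (rule sum.cong[OF refl])
      fix j assume j: "j \<in> {..<n}"
      show "(\<Sum>i<n. Nm A n y $$ (i,j) * u x j * u y i) = (\<Sum>i<n. Nm A n y $$ (j,i) * u y i) * u x j"
        unfolding sum_distrib_right
        by (rule sum.cong[OF refl]) (use j sym in auto)
    qed
    also have "\<dots> = (\<Sum>j<n. (if j = k then u x j else 0))"
      by (rule sum.cong[OF refl]) (use cy in simp)
    also have "\<dots> = u x k" using k by simp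
    finally show ?thesis by simp
  qed
  have "u y k - u x k = (\<Sum>i<n. \<Sum>j<n. (Nm A n x $$ (i,j) - Nm A n y $$ (i,j)) * u x j * u y i)"
    unfolding e1 e2 by (simp add: sum_subtractf algebra_simps)
  also have "\<dots> = (\<Sum>i<n. (x - y) * (u x i * u y i))"
  proof (rule sum.cong[OF refl])
    fix i assume i: "i \<in> {..<n}"
    have "(\<Sum>j<n. (Nm A n x $$ (i,j) - Nm A n y $$ (i,j)) * u x j * u y i)
        = (\<Sum>j<n. (if j = i then (x - y) * (u x j * u y i) else 0))"
      by (rule sum.cong[OF refl]) (use i in auto)
    also have "\<dots> = (x - y) * (u x i * u y i)" using i by simp
    finally show "(\<Sum>j<n. (Nm A n x $$ (i,j) - Nm A n y $$ (i,j)) * u x j * u y i) = (x - y) * (u x i * u y i)" .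
  qed
  also have "\<dots> = (x - y) * (\<Sum>i<n. u x i * u y i)" by (simp add: sum_distrib_left)
  finally show ?thesis unfolding u_def .
qed

lemma resolvent_deriv:
  assumes sym: "\<And>i j. i < n \<Longrightarrow> j < n \<Longrightarrow> A $$ (i,j) = A $$ (j,i)"
    and k: "k < n" and dx: "det (Nm A n x) \<noteq> 0"
  shows "((\<lambda>y. cofactor (Nm A n y) k k / det (Nm A n y)) has_field_derivative
          - (\<Sum>i<n. (cofactor (Nm A n x) k i / det (Nm A n x))^2)) (at x)"
proof -
  define u where "u z i = cofactor (Nm A n z) k i / det (Nm A n z)" for z i
  have "((\<lambda>y. det (Nm A n y)) \<longlongrightarrow> det (Nm A n x)) (at x)"
    using isCont_det_Nm unfolding isCont_def .
  then have ev: "eventually (\<lambda>y. det (Nm A n y) \<noteq> 0) (at x)"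
    using dx by (rule tendsto_imp_eventually_ne)
  have ev2: "eventually (\<lambda>y. y \<noteq> x) (at x)" by (simp add: eventually_at_filter)
  have cu: "isCont (\<lambda>y. u y i) x" if "i < n" for i
    unfolding u_def using isCont_cofactor_Nm[OF k that] isCont_det_Nm dx
    by (intro continuous_intros) auto
  have "isCont (\<lambda>y. - (\<Sum>i<n. u x i * u y i)) x"
    using cu by (intro continuous_intros) auto
  then have lim: "((\<lambda>y. - (\<Sum>i<n. u x i * u y i)) \<longlongrightarrow> - (\<Sum>i<n. u x i * u x i)) (at x)"
    unfolding isCont_def .
  have "eventually (\<lambda>y. - (\<Sum>i<n. u x i * u y i) = (u y k - u x k) / (y - x)) (at x)"
    using ev ev2
  proof eventually_elim
    case (elim y)
    have "u y k - u x k = (x - y) * (\<Sum>i<n. u x i * u y i)"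
      unfolding u_def by (rule resolvent_identity[OF sym k dx elim(1)])
    then show ?case using elim(2) by (simp add: field_simps)
  qed
  from Lim_transform_eventually[OF lim this]
  have "((\<lambda>y. (u y k - u x k) / (y - x)) \<longlongrightarrow> - (\<Sum>i<n. (u x i)^2)) (at x)"
    by (simp add: power2_eq_square)
  then show ?thesis unfolding has_field_derivative_iff u_def by simp
qed

lemma T4_mat:
  fixes A :: "real mat"
  assumes A: "A \<in> carrier_mat n n"
    and sym: "\<And>i j. i < n \<Longrightarrow> j < n \<Longrightarrow> A $$ (i,j) = A $$ (j,i)"
    and k: "k < n"
  shows "poly (pderiv (char_poly A) * char_poly (mat_delete A k k) - char_poly A * pderiv (char_poly (mat_delete A k k))) x
         \<ge> (poly (char_poly (mat_delete A k k)) x)^2"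
proof -
  define P where "P = char_poly A"
  define Q where "Q = char_poly (mat_delete A k k)"
  have PN: "poly P y = det (Nm A n y)" for y
  proof -
    have "- char_matrix A y = Nm A n y"
      by (rule eq_matI) (use A in \<open>auto simp: char_matrix_def\<close>)
    then show ?thesis unfolding P_def char_poly_matrix[OF A] by simp
  qed
  have Ad: "mat_delete A k k \<in> carrier_mat (n - 1) (n - 1)" using A by (rule mat_delete_carrier)
  have QN: "poly Q y = det (mat_delete (Nm A n y) k k)" for y
  proof -
    have "- char_matrix (mat_delete A k k) y = mat_delete (Nm A n y) k k"
      by (rule eq_matI) (use A k in \<open>auto simp: char_matrix_def mat_delete_def\<close>)
    then show ?thesis unfolding Q_def char_poly_matrix[OF Ad] by simp
  qed
  have m1: "(-1::real) ^ (k + k) = 1" by (simp add: power_add flip: power_mult_distrib)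
  have cof: "cofactor (Nm A n y) k k = det (mat_delete (Nm A n y) k k)" for y
    unfolding cofactor_def m1 by simp
  have Pnz: "P \<noteq> 0"
  proof
    assume "P = 0"
    then show False using degree_monic_char_poly[OF A] unfolding P_def by simp
  qed
  have main: "poly (pderiv P * Q - P * pderiv Q) y \<ge> (poly Q y)^2" if py: "poly P y \<noteq> 0" for y
  proof -
    have dy: "det (Nm A n y) \<noteq> 0" using py PN by simp
    have D1: "((\<lambda>z. poly Q z / poly P z) has_field_derivative
        (poly (pderiv Q) y * poly P y - poly (pderiv P) y * poly Q y) / (poly P y ^ Suc (Suc 0))) (at y)"
      by (rule DERIV_quotient[OF poly_DERIV poly_DERIV py])
    have feq: "(\<lambda>z. poly Q z / poly P z) = (\<lambda>z. cofactor (Nm A n z) k k / det (Nm A n z))"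
      by (intro ext) (simp add: PN QN cof)
    define S where "S = (\<Sum>i<n. (cofactor (Nm A n y) k i / det (Nm A n y))^2)"
    have D2: "((\<lambda>z. poly Q z / poly P z) has_field_derivative - S) (at y)"
      unfolding feq S_def by (rule resolvent_deriv[OF sym k dy])
    have eqD: "(poly (pderiv Q) y * poly P y - poly (pderiv P) y * poly Q y) / (poly P y ^ Suc (Suc 0)) = - S"
      by (rule DERIV_unique[OF D1 D2])
    have Sge: "(cofactor (Nm A n y) k k / det (Nm A n y))^2 \<le> S"
      unfolding S_def by (rule member_le_sum) (use k in auto)
    have uk: "cofactor (Nm A n y) k k / det (Nm A n y) = poly Q y / poly P y"
      by (simp add: PN QN cof)
    define a where "a = poly (pderiv Q) y * poly P y - poly (pderiv P) y * poly Q y"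
    define p where "p = poly P y"
    define q where "q = poly Q y"
    have p0: "p \<noteq> 0" using py p_def by simp
    have a_eq: "a = - S * p^2" using eqD p0 unfolding a_def p_def by (simp add: field_simps power2_eq_square)
    have "(q / p)^2 * p^2 \<le> S * p^2"
      using Sge uk q_def p_def by (intro mult_right_mono) auto
    moreover have "(q / p)^2 * p^2 = q^2" using p0 by (simp add: power_divide)
    ultimately have "q^2 \<le> - a" using a_eq by simp
    moreover have "poly (pderiv P * Q - P * pderiv Q) y = - a"
      unfolding a_def by (simp add: algebra_simps)
    ultimately show ?thesis using q_def by simp
  qed
  define h where "h y = poly (pderiv P * Q - P * pderiv Q) y - (poly Q y)^2" for y
  have "0 \<le> h x"
  proof (rule tendsto_lowerbound)
    show "(h \<longlongrightarrow> h x) (at x)"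
      unfolding h_def by (intro tendsto_intros poly_DERIV[THEN DERIV_isCont, unfolded isCont_def])
    show "eventually (\<lambda>y. 0 \<le> h y) (at x)"
      using eventually_poly_nz[OF Pnz, of x] by (rule eventually_mono) (use main h_def in auto)
  qed simp
  then show ?thesis unfolding h_def P_def Q_def by simp
qed

lemma charpoly_char_poly:
  assumes g: "bij_betw g {0..<m} V"
  shows "charpoly V E = char_poly (mat m m (\<lambda>(i,j). adj E (g i) (g j)))"
proof -
  have inj: "inj_on g {0..<m}" using g by (simp add: bij_betw_def)
  have "charpoly V E = det (mat m m (\<lambda>(i,j). cpm E (g i) (g j)))"
    unfolding charpoly_detS by (rule detS_mat[OF g])
  also have "mat m m (\<lambda>(i,j). cpm E (g i) (g j)) = char_poly_matrix (mat m m (\<lambda>(i,j). adj E (g i) (g j)))"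
  proof (rule eq_matI)
    fix i j assume i: "i < dim_row (char_poly_matrix (mat m m (\<lambda>(i,j). adj E (g i) (g j))))"
      and j: "j < dim_col (char_poly_matrix (mat m m (\<lambda>(i,j). adj E (g i) (g j))))"
    then have i': "i < m" and j': "j < m" by (auto simp: char_poly_matrix_def)
    have "g j = g i \<longleftrightarrow> i = j" using inj i' j' unfolding inj_on_def by auto
    then show "mat m m (\<lambda>(i,j). cpm E (g i) (g j)) $$ (i, j) = char_poly_matrix (mat m m (\<lambda>(i,j). adj E (g i) (g j))) $$ (i, j)"
      using i' j' by (auto simp: char_poly_matrix_def cpm_def)
  qed (auto simp: char_poly_matrix_def)
  finally show ?thesis unfolding char_poly_def .
qed

lemma T4_graph:
  assumes G: "simple_graph V E" and v: "v \<in> V"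
  shows "poly (pderiv (charpoly V E) * charpoly (V - {v}) E - charpoly V E * pderiv (charpoly (V - {v}) E)) x
         \<ge> (poly (charpoly (V - {v}) E) x)^2"
proof -
  have fin: "finite V" using G by (simp add: simple_graph_def)
  obtain g where g: "bij_betw g {0..<card V} V" using ex_bij_betw_nat_finite[OF fin] by blast
  define m where "m = card V"
  have gm: "bij_betw g {0..<m} V" using g m_def by simp
  define k where "k = inv_into {0..<m} g v"
  have k: "k < m" "g k = v" using gm v unfolding k_def
    by (auto simp: bij_betw_def inv_into_into f_inv_into_f)
  define Ag where "Ag = mat m m (\<lambda>(i,j). adj E (g i) (g j))"
  have Ac: "Ag \<in> carrier_mat m m" unfolding Ag_def by simp
  have sym: "Ag $$ (i,j) = Ag $$ (j,i)" if "i < m" "j < m" for i j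
    using that G unfolding Ag_def adj_def simple_graph_def by auto
  have P: "charpoly V E = char_poly Ag" unfolding Ag_def by (rule charpoly_char_poly[OF gm])
  define sh where "sh i = (if i < k then i else Suc i)" for i
  have shb: "bij_betw sh {0..<m - 1} ({0..<m} - {k})"
  proof (rule bij_betwI[where g = "\<lambda>j. if j < k then j else j - 1"])
    show "sh \<in> {0..<m - 1} \<rightarrow> {0..<m} - {k}" using k unfolding sh_def by (auto split: if_splits)
    show "(\<lambda>j. if j < k then j else j - 1) \<in> {0..<m} - {k} \<rightarrow> {0..<m - 1}" using k by (auto split: if_splits)
    show "(if sh x < k then sh x else sh x - 1) = x" if "x \<in> {0..<m - 1}" for x
      unfolding sh_def by auto
    show "sh (if y < k then y else y - 1) = y" if "y \<in> {0..<m} - {k}" for y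
      using that unfolding sh_def by auto
  qed
  have "bij_betw g {k} {v}" using k by (simp add: bij_betw_def)
  then have gd: "bij_betw g ({0..<m} - {k}) (V - {v})"
    by (rule bij_betw_DiffI[OF gm]) (use k v in auto)
  have g'b: "bij_betw (g \<circ> sh) {0..<m - 1} (V - {v})"
    by (rule bij_betw_trans[OF shb gd])
  have "charpoly (V - {v}) E = char_poly (mat (m - 1) (m - 1) (\<lambda>(i,j). adj E ((g \<circ> sh) i) ((g \<circ> sh) j)))"
    by (rule charpoly_char_poly[OF g'b])
  also have "mat (m - 1) (m - 1) (\<lambda>(i,j). adj E ((g \<circ> sh) i) ((g \<circ> sh) j)) = mat_delete Ag k k"
    by (rule eq_matI) (auto simp: mat_delete_def Ag_def sh_def)
  finally have Q: "charpoly (V - {v}) E = char_poly (mat_delete Ag k k)" .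
  show ?thesis unfolding P Q by (rule T4_mat[OF Ac sym k(1)])
qed

definition goodW :: "real poly \<Rightarrow> real poly \<Rightarrow> bool" where
  "goodW p q \<longleftrightarrow> (\<forall>x. poly (pderiv p * q - p * pderiv q) x \<ge> (poly q x)^2)"

lemma at_left_le_at: "at_left (\<mu>::real) \<le> at \<mu>"
  by (rule at_le) simp

lemma at_right_le_at: "at_right (\<mu>::real) \<le> at \<mu>"
  by (rule at_le) simp

lemma poly_nonneg_from_ae:
  fixes g D :: "real poly"
  assumes "D \<noteq> 0" "\<And>y. poly D y \<noteq> 0 \<Longrightarrow> poly g y \<ge> 0"
  shows "poly g x \<ge> 0"
proof (rule tendsto_lowerbound)
  show "(poly g \<longlongrightarrow> poly g x) (at x)"
    using poly_DERIV[THEN DERIV_isCont] unfolding isCont_def by blast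
  show "eventually (\<lambda>y. 0 \<le> poly g y) (at x)"
    using eventually_poly_nz[OF assms(1)] by (rule eventually_mono) (use assms(2) in auto)
qed simp

lemma coprime_no_common_root:
  fixes p q :: "real poly"
  assumes "coprime p q" "poly p x = 0" "poly q x = 0"
  shows False
proof -
  have "[:-x, 1:] dvd p" "[:-x, 1:] dvd q" using assms by (simp_all add: poly_eq_0_iff_dvd)
  then have "is_unit [:-x, 1:]" using assms(1) by (rule coprime_common_divisor[rotated])
  then show False by (simp add: is_unit_poly_iff)
qed

lemma red_facts:
  fixes P Q :: "real poly"
  assumes "P \<noteq> 0" "Q \<noteq> 0"
  shows "P = gcd P Q * (P div gcd P Q)" "Q = gcd P Q * (Q div gcd P Q)"
    "coprime (P div gcd P Q) (Q div gcd P Q)" "gcd P Q \<noteq> 0" "P div gcd P Q \<noteq> 0" "Q div gcd P Q \<noteq> 0"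
proof -
  show 1: "P = gcd P Q * (P div gcd P Q)" by simp
  show 2: "Q = gcd P Q * (Q div gcd P Q)" by simp
  show "coprime (P div gcd P Q) (Q div gcd P Q)" using assms by (intro div_gcd_coprime) simp
  show "gcd P Q \<noteq> 0" using assms by simp
  show "P div gcd P Q \<noteq> 0" using 1 assms(1) by (metis mult_zero_right)
  show "Q div gcd P Q \<noteq> 0" using 2 assms(2) by (metis mult_zero_right)
qed

lemma red_pole_iff:
  fixes P Q :: "real poly"
  assumes "P \<noteq> 0" "Q \<noteq> 0"
  shows "rat_pole P Q \<mu> \<longleftrightarrow> poly (Q div gcd P Q) \<mu> = 0"
proof -
  note r = red_facts[OF assms]
  define D p q where "D = gcd P Q" "p = P div gcd P Q" "q = Q div gcd P Q"
  have oP: "order \<mu> P = order \<mu> D + order \<mu> p"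
    using r(1,4,5) D_p_q_def by (metis order_mult mult_eq_0_iff)
  have oQ: "order \<mu> Q = order \<mu> D + order \<mu> q"
    using r(2,4,6) D_p_q_def by (metis order_mult mult_eq_0_iff)
  have "rat_pole P Q \<mu> \<longleftrightarrow> order \<mu> p < order \<mu> q"
    unfolding rat_pole_def using assms oP oQ by simp
  also have "\<dots> \<longleftrightarrow> poly q \<mu> = 0"
  proof
    assume "order \<mu> p < order \<mu> q"
    then have "order \<mu> q > 0" by simp
    then show "poly q \<mu> = 0" using order_gt_0_iff r(6) D_p_q_def by blast
  next
    assume q0: "poly q \<mu> = 0"
    then have "poly p \<mu> \<noteq> 0" using coprime_no_common_root r(3) D_p_q_def by blast
    then have "order \<mu> p = 0" by (rule order_0I)
    moreover have "order \<mu> q > 0" using q0 order_gt_0_iff r(6) D_p_q_def by blast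
    ultimately show "order \<mu> p < order \<mu> q" by simp
  qed
  finally show ?thesis using D_p_q_def by simp
qed

lemma red_zero_iff:
  fixes P Q :: "real poly"
  assumes "P \<noteq> 0" "Q \<noteq> 0"
  shows "order \<mu> Q < order \<mu> P \<longleftrightarrow> poly (P div gcd P Q) \<mu> = 0"
proof -
  have "rat_pole Q P \<mu> \<longleftrightarrow> poly (P div gcd Q P) \<mu> = 0"
    by (rule red_pole_iff[OF assms(2,1)])
  then show ?thesis unfolding rat_pole_def using assms by (simp add: gcd.commute)
qed

lemma red_good:
  fixes P Q :: "real poly"
  assumes "P \<noteq> 0" "Q \<noteq> 0" "goodW P Q"
  shows "goodW (P div gcd P Q) (Q div gcd P Q)"
proof -
  note r = red_facts[OF assms(1,2)]
  define D p q where "D = gcd P Q" "p = P div gcd P Q" "q = Q div gcd P Q"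
  have PD: "P = D * p" and QD: "Q = D * q" using r D_p_q_def by auto
  have id: "pderiv P * Q - P * pderiv Q = D^2 * (pderiv p * q - p * pderiv q)"
    unfolding PD QD by (simp add: pderiv_mult algebra_simps power2_eq_square)
  have "poly (pderiv p * q - p * pderiv q - q^2) x \<ge> 0" for x
  proof (rule poly_nonneg_from_ae[where D = D])
    show "D \<noteq> 0" using r(4) D_p_q_def by simp
    fix y assume Dy: "poly D y \<noteq> 0"
    have "(poly Q y)^2 \<le> poly (pderiv P * Q - P * pderiv Q) y" using assms(3) unfolding goodW_def by blast
    then have "(poly D y)^2 * (poly q y)^2 \<le> (poly D y)^2 * poly (pderiv p * q - p * pderiv q) y"
      unfolding id unfolding QD by (simp add: power_mult_distrib)
    then have "(poly q y)^2 \<le> poly (pderiv p * q - p * pderiv q) y"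
      using Dy by (simp add: mult_le_cancel_left)
    then show "poly (pderiv p * q - p * pderiv q - q^2) y \<ge> 0" by simp
  qed
  then show ?thesis unfolding goodW_def D_p_q_def by simp
qed

lemma good_incr:
  fixes p q :: "real poly"
  assumes good: "goodW p q" and ab: "a \<le> b" and nz: "\<And>x. a \<le> x \<Longrightarrow> x \<le> b \<Longrightarrow> poly q x \<noteq> 0"
  shows "poly p b / poly q b - poly p a / poly q a \<ge> b - a"
proof -
  define g where "g x = poly p x / poly q x - x" for x
  have der: "DERIV g x :> (poly (pderiv p) x * poly q x - poly (pderiv q) x * poly p x) / (poly q x ^ Suc (Suc 0)) - 1"
    if "poly q x \<noteq> 0" for x
    unfolding g_def by (intro DERIV_diff DERIV_quotient poly_DERIV DERIV_ident that)
  have nn: "(poly (pderiv p) x * poly q x - poly (pderiv q) x * poly p x) / (poly q x ^ Suc (Suc 0)) - 1 \<ge> 0"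
    if "poly q x \<noteq> 0" for x
  proof -
    have "(poly q x)^2 \<le> poly (pderiv p) x * poly q x - poly (pderiv q) x * poly p x"
      using good unfolding goodW_def by (metis (no_types) poly_diff poly_mult mult.commute)
    moreover have "(poly q x)^2 > 0" using that by simp
    ultimately have "1 \<le> (poly (pderiv p) x * poly q x - poly (pderiv q) x * poly p x) / (poly q x)^2"
      by (simp add: le_divide_eq)
    then show ?thesis by (simp add: power2_eq_square)
  qed
  have "g a \<le> g b"
  proof (rule DERIV_nonneg_imp_increasing_open[OF ab])
    fix x assume "a < x" "x < b"
    then have "poly q x \<noteq> 0" using nz by simp
    then show "\<exists>y. DERIV g x :> y \<and> 0 \<le> y" using der nn by blast
  next
    show "continuous_on {a..b} g"
    proof (rule continuous_at_imp_continuous_on, rule ballI)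
      fix x assume "x \<in> {a..b}"
      then have "poly q x \<noteq> 0" using nz by auto
      then show "isCont g x" by (rule DERIV_isCont[OF der])
    qed
  qed
  then show ?thesis unfolding g_def by simp
qed

lemma cont_quot:
  fixes p q :: "real poly"
  assumes "poly q x \<noteq> 0"
  shows "isCont (\<lambda>y. poly p y / poly q y) x"
  using assms by (intro continuous_intros) auto

lemma ev_left_nz:
  fixes q :: "real poly"
  assumes "q \<noteq> 0"
  obtains b where "b < \<mu>" "\<And>y. b < y \<Longrightarrow> y < \<mu> \<Longrightarrow> poly q y \<noteq> 0"
proof -
  have "eventually (\<lambda>y. poly q y \<noteq> 0) (at_left \<mu>)"
    using eventually_poly_nz[OF assms] by (rule filter_leD[OF at_left_le_at])
  then show ?thesis using that unfolding eventually_at_left_field by blast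
qed

lemma ev_right_nz:
  fixes q :: "real poly"
  assumes "q \<noteq> 0"
  obtains b where "\<mu> < b" "\<And>y. \<mu> < y \<Longrightarrow> y < b \<Longrightarrow> poly q y \<noteq> 0"
proof -
  have "eventually (\<lambda>y. poly q y \<noteq> 0) (at_right \<mu>)"
    using eventually_poly_nz[OF assms] by (rule filter_leD[OF at_right_le_at])
  then show ?thesis using that unfolding eventually_at_right_field by blast
qed

lemma pole_infinity:
  fixes p q :: "real poly"
  assumes cop: "coprime p q" and q0: "poly q \<mu> = 0" and qnz: "q \<noteq> 0" and F: "F \<le> at \<mu>"
  shows "filterlim (\<lambda>x. poly p x / poly q x) at_infinity F"
proof (rule filterlim_divide_at_infinity)
  show "poly p \<mu> \<noteq> 0" using coprime_no_common_root[OF cop _ q0] by blast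
  show "(poly p \<longlongrightarrow> poly p \<mu>) F"
    using DERIV_isCont[OF poly_DERIV[of p \<mu>]] unfolding isCont_def by (rule tendsto_mono[OF F])
  have "(poly q \<longlongrightarrow> 0) F"
    using DERIV_isCont[OF poly_DERIV[of q \<mu>]] q0 unfolding isCont_def by (metis tendsto_mono[OF F])
  moreover have "eventually (\<lambda>x. poly q x \<noteq> 0) F"
    using eventually_poly_nz[OF qnz] by (rule filter_leD[OF F])
  ultimately show "filterlim (poly q) (at 0) F"
    unfolding filterlim_at by auto
qed

lemma pole_left:
  fixes p q :: "real poly"
  assumes good: "goodW p q" and cop: "coprime p q" and qnz: "q \<noteq> 0" and q0: "poly q \<mu> = 0"
  shows "filterlim (\<lambda>x. poly p x / poly q x) at_top (at_left \<mu>)"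
proof -
  define f where "f x = poly p x / poly q x" for x
  obtain b where b: "b < \<mu>" "\<And>y. b < y \<Longrightarrow> y < \<mu> \<Longrightarrow> poly q y \<noteq> 0" using ev_left_nz[OF qnz] by blast
  define a where "a = (b + \<mu>) / 2"
  have a: "b < a" "a < \<mu>" using b(1) unfolding a_def by auto
  have inf: "filterlim f at_infinity (at_left \<mu>)"
    unfolding f_def by (rule pole_infinity[OF cop q0 qnz at_left_le_at])
  show ?thesis unfolding filterlim_at_top f_def[symmetric]
  proof
    fix Z :: real
    define K where "K = \<bar>Z\<bar> + \<bar>f a\<bar> + 1"
    have "eventually (\<lambda>x. K \<le> norm (f x)) (at_left \<mu>)"
      using inf unfolding filterlim_at_infinity[OF order_refl] K_def by auto
    moreover have "eventually (\<lambda>x. x \<in> {a<..<\<mu>}) (at_left \<mu>)"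
      using a by (intro eventually_at_left_real) simp
    ultimately show "eventually (\<lambda>x. Z \<le> f x) (at_left \<mu>)"
    proof eventually_elim
      case (elim x)
      have "f x - f a \<ge> x - a"
        unfolding f_def by (rule good_incr[OF good]) (use elim a b in auto)
      then have "f x > - K" using elim unfolding K_def by auto
      then show ?case using elim(1) unfolding K_def by auto
    qed
  qed
qed

lemma pole_right:
  fixes p q :: "real poly"
  assumes good: "goodW p q" and cop: "coprime p q" and qnz: "q \<noteq> 0" and q0: "poly q \<mu> = 0"
  shows "filterlim (\<lambda>x. poly p x / poly q x) at_bot (at_right \<mu>)"
proof -
  define f where "f x = poly p x / poly q x" for x
  obtain b where b: "\<mu> < b" "\<And>y. \<mu> < y \<Longrightarrow> y < b \<Longrightarrow> poly q y \<noteq> 0" using ev_right_nz[OF qnz] by blast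
  define a where "a = (b + \<mu>) / 2"
  have a: "a < b" "\<mu> < a" using b(1) unfolding a_def by auto
  have inf: "filterlim f at_infinity (at_right \<mu>)"
    unfolding f_def by (rule pole_infinity[OF cop q0 qnz at_right_le_at])
  show ?thesis unfolding filterlim_at_bot f_def[symmetric]
  proof
    fix Z :: real
    define K where "K = \<bar>Z\<bar> + \<bar>f a\<bar> + 1"
    have "eventually (\<lambda>x. K \<le> norm (f x)) (at_right \<mu>)"
      using inf unfolding filterlim_at_infinity[OF order_refl] K_def by auto
    moreover have "eventually (\<lambda>x. x \<in> {\<mu><..<a}) (at_right \<mu>)"
      using a by (intro eventually_at_right_real) simp
    ultimately show "eventually (\<lambda>x. f x \<le> Z) (at_right \<mu>)"
    proof eventually_elim
      case (elim x)
      have "f a - f x \<ge> a - x"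
        unfolding f_def by (rule good_incr[OF good]) (use elim a b in auto)
      then have "f x < K" using elim unfolding K_def by auto
      then show ?case using elim(1) unfolding K_def by auto
    qed
  qed
qed

lemma zero_left:
  fixes p q :: "real poly"
  assumes good: "goodW p q" and cop: "coprime p q" and qnz: "q \<noteq> 0" and p0: "poly p \<mu> = 0"
  shows "filterlim (\<lambda>x. - poly q x / poly p x) at_top (at_left \<mu>)"
proof -
  define f where "f x = poly p x / poly q x" for x
  have qm: "poly q \<mu> \<noteq> 0" using coprime_no_common_root[OF cop p0] by blast
  obtain b where b: "b < \<mu>" "\<And>y. b < y \<Longrightarrow> y < \<mu> \<Longrightarrow> poly q y \<noteq> 0" using ev_left_nz[OF qnz] by blast
  have "(f \<longlongrightarrow> f \<mu>) (at_left \<mu>)"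
    using cont_quot[OF qm, of p] unfolding isCont_def f_def by (rule tendsto_mono[OF at_left_le_at])
  then have lim: "((\<lambda>x. - f x) \<longlongrightarrow> 0) (at_left \<mu>)"
    using p0 unfolding f_def by (metis (no_types) div_0 neg_0_equal_iff_equal tendsto_minus)
  have "eventually (\<lambda>x. x \<in> {b<..<\<mu>}) (at_left \<mu>)"
    using b by (intro eventually_at_left_real) simp
  then have pos: "eventually (\<lambda>x. 0 < - f x) (at_left \<mu>)"
  proof (rule eventually_mono)
    fix x assume x: "x \<in> {b<..<\<mu>}"
    have "f \<mu> - f x \<ge> \<mu> - x"
      unfolding f_def by (rule good_incr[OF good]) (use x b qm in \<open>auto simp: less_eq_real_def\<close>)
    then show "0 < - f x" using x p0 unfolding f_def by auto
  qed
  have "filterlim (\<lambda>x. inverse (- f x)) at_top (at_left \<mu>)"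
    by (rule filterlim_inverse_at_top[OF lim pos])
  moreover have "inverse (- f x) = - poly q x / poly p x" for x
    unfolding f_def by (simp add: inverse_eq_divide)
  ultimately show ?thesis by simp
qed

lemma zero_above_poles:
  fixes p q :: "real poly"
  assumes good: "goodW p q" and cop: "coprime p q" and qnz: "q \<noteq> 0" and q0: "poly q \<mu> = 0"
  shows "\<exists>z>\<mu>. poly p z = 0"
proof -
  define f where "f x = poly p x / poly q x" for x
  define Z where "Z = {w. poly q w = 0}"
  have finZ: "finite Z" unfolding Z_def by (rule poly_roots_finite[OF qnz])
  have muZ: "\<mu> \<in> Z" unfolding Z_def using q0 by simp
  define m where "m = Max Z"
  have mZ: "m \<in> Z" unfolding m_def using finZ muZ by (intro Max_in) auto
  have mu_le: "\<mu> \<le> m" unfolding m_def using finZ muZ by simp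
  have above: "poly q x \<noteq> 0" if "x > m" for x
  proof
    assume "poly q x = 0"
    then have "x \<in> Z" unfolding Z_def by simp
    then have "x \<le> m" unfolding m_def using finZ by simp
    then show False using that by simp
  qed
  have qm: "poly q m = 0" using mZ unfolding Z_def by simp
  have "filterlim f at_bot (at_right m)" unfolding f_def by (rule pole_right[OF good cop qnz qm])
  then have "eventually (\<lambda>x. f x \<le> -1) (at_right m)" unfolding filterlim_at_bot by blast
  moreover have "eventually (\<lambda>x. x \<in> {m<..<m+1}) (at_right m)"
    by (intro eventually_at_right_real) simp
  ultimately have "eventually (\<lambda>x. f x \<le> -1 \<and> x \<in> {m<..<m+1}) (at_right m)"
    by (rule eventually_conj)
  then obtain a where a: "f a \<le> -1" "m < a" using eventually_happens[of _ "at_right m"] by auto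
  define b where "b = a - f a"
  have ab: "a \<le> b" using a unfolding b_def by simp
  have "f b - f a \<ge> b - a" unfolding f_def
    by (rule good_incr[OF good ab]) (use a above in auto)
  then have fb: "0 \<le> f b" unfolding b_def by simp
  have "\<exists>z\<ge>a. z \<le> b \<and> f z = 0"
  proof (rule IVT[of f a 0 b])
    show "f a \<le> 0" using a by simp
    show "0 \<le> f b" by (rule fb)
    show "a \<le> b" by (rule ab)
    show "\<forall>x. a \<le> x \<and> x \<le> b \<longrightarrow> isCont f x"
      unfolding f_def using a above by (auto intro!: cont_quot)
  qed
  then obtain z where z: "a \<le> z" "f z = 0" by blast
  have "poly q z \<noteq> 0" using z a above by simp
  then have "poly p z = 0" using z unfolding f_def by simp
  moreover have "z > \<mu>" using z a mu_le by simp
  ultimately show ?thesis by blast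
qed

lemma pole_from_limit:
  fixes N Dn :: "real poly"
  assumes Dnz: "Dn \<noteq> 0" and lim: "filterlim (\<lambda>x. poly N x / poly Dn x) at_top (at_left \<mu>)"
  shows "rat_pole N Dn \<mu>"
proof -
  have Nnz: "N \<noteq> 0"
  proof
    assume "N = 0"
    then have "eventually (\<lambda>x. (1::real) \<le> 0) (at_left \<mu>)"
      using lim unfolding filterlim_at_top by auto
    then show False by simp
  qed
  have "order \<mu> N < order \<mu> Dn"
  proof (rule ccontr)
    assume "\<not> ?thesis"
    then have le: "order \<mu> Dn \<le> order \<mu> N" by simp
    obtain n' where n': "N = [:-\<mu>, 1:] ^ order \<mu> N * n'" "\<not> [:-\<mu>, 1:] dvd n'"
      using order_decomp[OF Nnz] by blast
    obtain d' where d': "Dn = [:-\<mu>, 1:] ^ order \<mu> Dn * d'" "\<not> [:-\<mu>, 1:] dvd d'"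
      using order_decomp[OF Dnz] by blast
    have n'0: "poly n' \<mu> \<noteq> 0" and d'0: "poly d' \<mu> \<noteq> 0"
      using n'(2) d'(2) by (simp_all add: poly_eq_0_iff_dvd)
    define c where "c = order \<mu> N - order \<mu> Dn"
    define g where "g x = (x - \<mu>) ^ c * poly n' x / poly d' x" for x
    have eq: "poly N x / poly Dn x = g x" if "x \<noteq> \<mu>" for x
    proof -
      have "poly N x = (x - \<mu>) ^ order \<mu> N * poly n' x" by (subst n'(1)) (simp add: poly_power)
      also have "(x - \<mu>) ^ order \<mu> N = (x - \<mu>) ^ c * (x - \<mu>) ^ order \<mu> Dn"
        unfolding c_def using le by (simp flip: power_add)
      finally have 1: "poly N x = (x - \<mu>) ^ c * (x - \<mu>) ^ order \<mu> Dn * poly n' x" .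
      have 2: "poly Dn x = (x - \<mu>) ^ order \<mu> Dn * poly d' x" by (subst d'(1)) (simp add: poly_power)
      have ne: "(x - \<mu>) ^ order \<mu> Dn \<noteq> 0" using that by simp
      have "poly N x / poly Dn x = ((x - \<mu>) ^ order \<mu> Dn * ((x - \<mu>) ^ c * poly n' x)) / ((x - \<mu>) ^ order \<mu> Dn * poly d' x)"
        unfolding 1 2 by (simp add: ac_simps)
      also have "\<dots> = ((x - \<mu>) ^ c * poly n' x) / poly d' x" by (rule mult_divide_mult_cancel_left[OF ne])
      finally show ?thesis unfolding g_def .
    qed
    have "isCont g \<mu>" unfolding g_def using d'0 by (intro continuous_intros) auto
    then have "(g \<longlongrightarrow> g \<mu>) (at_left \<mu>)" unfolding isCont_def by (rule tendsto_mono[OF at_left_le_at])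
    moreover have "eventually (\<lambda>x. g x = poly N x / poly Dn x) (at_left \<mu>)"
    proof (rule eventually_mono)
      show "eventually (\<lambda>x. x \<in> {\<mu> - 1<..<\<mu>}) (at_left \<mu>)" by (rule eventually_at_left_real) simp
    next
      fix x assume "x \<in> {\<mu> - 1<..<\<mu>}"
      then show "g x = poly N x / poly Dn x" using eq[of x] by simp
    qed
    ultimately have "((\<lambda>x. poly N x / poly Dn x) \<longlongrightarrow> g \<mu>) (at_left \<mu>)"
      by (rule Lim_transform_eventually)
    moreover have "filterlim (\<lambda>x. poly N x / poly Dn x) at_infinity (at_left \<mu>)"
      using lim by (rule filterlim_at_top_imp_at_infinity)
    ultimately show False
      using not_tendsto_and_filterlim_at_infinity[of "at_left \<mu>"] by auto
  qed
  then show ?thesis unfolding rat_pole_def using Nnz Dnz by simp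
qed

lemma ev_left_poly_nz:
  fixes q :: "real poly"
  shows "q \<noteq> 0 \<Longrightarrow> eventually (\<lambda>x. poly q x \<noteq> 0) (at_left \<mu>)"
  using eventually_poly_nz by (rule filter_leD[OF at_left_le_at])

lemma comb:
  fixes P1 Q1 P2 Q2 :: "real poly"
  assumes nz: "P1 \<noteq> 0" "Q1 \<noteq> 0" "P2 \<noteq> 0" "Q2 \<noteq> 0"
    and g1: "goodW P1 Q1" and g2: "goodW P2 Q2"
    and h: "rat_pole P1 Q1 \<mu> \<or> order \<mu> Q2 < order \<mu> P2"
  shows "rat_pole (P1 * P2 - Q1 * Q2) (Q1 * P2) \<mu>"
proof -
  note r1 = red_facts[OF nz(1,2)] and r2 = red_facts[OF nz(3,4)]
  define D1 p1 q1 where "D1 = gcd P1 Q1" "p1 = P1 div gcd P1 Q1" "q1 = Q1 div gcd P1 Q1"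
  define D2 p2 q2 where "D2 = gcd P2 Q2" "p2 = P2 div gcd P2 Q2" "q2 = Q2 div gcd P2 Q2"
  have good1: "goodW p1 q1" using red_good[OF nz(1,2) g1] D1_p1_q1_def by simp
  have good2: "goodW p2 q2" using red_good[OF nz(3,4) g2] D2_p2_q2_def by simp
  have cop1: "coprime p1 q1" and cop2: "coprime p2 q2" using r1(3) r2(3) D1_p1_q1_def D2_p2_q2_def by simp_all
  have q1nz: "q1 \<noteq> 0" and p2nz: "p2 \<noteq> 0" and q2nz: "q2 \<noteq> 0" and D1nz: "D1 \<noteq> 0" and D2nz: "D2 \<noteq> 0"
    using r1 r2 D1_p1_q1_def D2_p2_q2_def by simp_all
  have P1e: "P1 = D1 * p1" and Q1e: "Q1 = D1 * q1" and P2e: "P2 = D2 * p2" and Q2e: "Q2 = D2 * q2"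
    using r1 r2 D1_p1_q1_def D2_p2_q2_def by simp_all
  have pole1: "rat_pole P1 Q1 \<mu> \<longleftrightarrow> poly q1 \<mu> = 0" using red_pole_iff[OF nz(1,2)] D1_p1_q1_def by simp
  have zero2: "order \<mu> Q2 < order \<mu> P2 \<longleftrightarrow> poly p2 \<mu> = 0" using red_zero_iff[OF nz(3,4)] D2_p2_q2_def by simp
  define F1 where "F1 x = poly p1 x / poly q1 x" for x
  define G2 where "G2 x = - poly q2 x / poly p2 x" for x
  have evH: "eventually (\<lambda>x. poly (P1 * P2 - Q1 * Q2) x / poly (Q1 * P2) x = F1 x + G2 x) (at_left \<mu>)"
    using ev_left_poly_nz[OF D1nz] ev_left_poly_nz[OF D2nz] ev_left_poly_nz[OF q1nz] ev_left_poly_nz[OF p2nz]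
  proof eventually_elim
    case (elim x)
    then show ?case unfolding P1e Q1e P2e Q2e F1_def G2_def by (simp add: field_simps)
  qed
  have F1lim: "filterlim F1 at_top (at_left \<mu>)" if "poly q1 \<mu> = 0"
    unfolding F1_def by (rule pole_left[OF good1 cop1 q1nz that])
  have F1t: "(F1 \<longlongrightarrow> F1 \<mu>) (at_left \<mu>)" if "poly q1 \<mu> \<noteq> 0"
    using cont_quot[OF that, of p1] unfolding isCont_def F1_def by (rule tendsto_mono[OF at_left_le_at])
  have G2lim: "filterlim G2 at_top (at_left \<mu>)" if "poly p2 \<mu> = 0"
    unfolding G2_def by (rule zero_left[OF good2 cop2 q2nz that])
  have G2t: "(G2 \<longlongrightarrow> G2 \<mu>) (at_left \<mu>)" if "poly p2 \<mu> \<noteq> 0"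
  proof -
    have "isCont G2 \<mu>" unfolding G2_def using that by (intro continuous_intros) auto
    then show ?thesis unfolding isCont_def by (rule tendsto_mono[OF at_left_le_at])
  qed
  have lim: "filterlim (\<lambda>x. F1 x + G2 x) at_top (at_left \<mu>)"
  proof (cases "poly q1 \<mu> = 0")
    case True
    show ?thesis
    proof (cases "poly p2 \<mu> = 0")
      case True2: True
      show ?thesis by (rule filterlim_at_top_add_at_top[OF F1lim[OF True] G2lim[OF True2]])
    next
      case False
      have "filterlim (\<lambda>x. G2 x + F1 x) at_top (at_left \<mu>)"
        by (rule filterlim_tendsto_add_at_top[OF G2t[OF False] F1lim[OF True]])
      then show ?thesis by (simp add: add.commute)
    qed
  next
    case False
    then have "poly p2 \<mu> = 0" using h pole1 zero2 by blast
    then show ?thesis by (rule filterlim_tendsto_add_at_top[OF F1t[OF False] G2lim])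
  qed
  have "filterlim (\<lambda>x. poly (P1 * P2 - Q1 * Q2) x / poly (Q1 * P2) x) at_top (at_left \<mu>)"
    using filterlim_cong[OF refl refl evH] lim by simp
  then show ?thesis by (rule pole_from_limit[rotated]) (use nz in simp)
qed

lemma charpoly_cong:
  assumes "\<And>u w. u \<in> V \<Longrightarrow> w \<in> V \<Longrightarrow> E u w = E' u w"
  shows "charpoly V E = charpoly V E'"
  unfolding charpoly_detS by (rule detS_cong) (use assms in \<open>simp add: cpm_def adj_def\<close>)

lemma charpoly_empty: "charpoly {} E = 1"
  unfolding charpoly_def by (simp add: permutes_empty)

lemma charpoly_nz:
  assumes "finite V"
  shows "charpoly V E \<noteq> 0"
proof -
  obtain g where g: "bij_betw g {0..<card V} V" using ex_bij_betw_nat_finite[OF assms] by blast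
  have c: "mat (card V) (card V) (\<lambda>(i,j). adj E (g i) (g j)) \<in> carrier_mat (card V) (card V)" by simp
  show ?thesis unfolding charpoly_char_poly[OF g]
    using degree_monic_char_poly[OF c] by (metis coeff_0 zero_neq_one)
qed

lemma charpoly_bridge:
  assumes fin1: "finite V1" and fin2: "finite V2" and disj: "V1 \<inter> V2 = {}"
    and a: "a \<in> V1" and b: "b \<in> V2"
    and c1: "\<And>u w. u \<in> V1 \<Longrightarrow> w \<in> V2 \<Longrightarrow> E u w \<longleftrightarrow> (u = a \<and> w = b)"
    and c2: "\<And>u w. u \<in> V2 \<Longrightarrow> w \<in> V1 \<Longrightarrow> E u w \<longleftrightarrow> (u = b \<and> w = a)"
  shows "charpoly (V1 \<union> V2) E = charpoly V1 E * charpoly V2 E - charpoly (V1 - {a}) E * charpoly (V2 - {b}) E"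
proof -
  have ab: "a \<noteq> b" using a b disj by auto
  have "detS (V1 \<union> V2) (cpm E) = detS V1 (cpm E) * detS V2 (cpm E) - cpm E a b * cpm E b a * detS (V1 - {a}) (cpm E) * detS (V2 - {b}) (cpm E)"
  proof (rule detS_bridge[OF fin1 fin2 disj a b])
    fix u w assume "u \<in> V1" "w \<in> V2" "(u, w) \<noteq> (a, b)"
    then show "cpm E u w = 0" using c1[of u w] disj by (auto simp: cpm_def adj_def)
  next
    fix u w assume "u \<in> V2" "w \<in> V1" "(u, w) \<noteq> (b, a)"
    then show "cpm E u w = 0" using c2[of u w] disj by (auto simp: cpm_def adj_def)
  qed
  moreover have "cpm E a b * cpm E b a = 1" using c1[OF a b] c2[OF b a] ab by (simp add: cpm_def adj_def)
  ultimately show ?thesis unfolding charpoly_detS by (simp add: mult.assoc)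
qed

lemma charpoly_union:
  assumes fin1: "finite V1" and fin2: "finite V2" and disj: "V1 \<inter> V2 = {}"
    and c1: "\<And>u w. u \<in> V1 \<Longrightarrow> w \<in> V2 \<Longrightarrow> \<not> E u w"
    and c2: "\<And>u w. u \<in> V2 \<Longrightarrow> w \<in> V1 \<Longrightarrow> \<not> E u w"
  shows "charpoly (V1 \<union> V2) E = charpoly V1 E * charpoly V2 E"
proof (cases "V1 = {} \<or> V2 = {}")
  case True
  then show ?thesis by (auto simp: charpoly_empty)
next
  case False
  then obtain a b where a: "a \<in> V1" and b: "b \<in> V2" by blast
  have "detS (V1 \<union> V2) (cpm E) = detS V1 (cpm E) * detS V2 (cpm E) - cpm E a b * cpm E b a * detS (V1 - {a}) (cpm E) * detS (V2 - {b}) (cpm E)"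
  proof (rule detS_bridge[OF fin1 fin2 disj a b])
    fix u w assume "u \<in> V1" "w \<in> V2"
    then show "cpm E u w = 0" using c1[of u w] disj by (auto simp: cpm_def adj_def)
  next
    fix u w assume "u \<in> V2" "w \<in> V1"
    then show "cpm E u w = 0" using c2[of u w] disj by (auto simp: cpm_def adj_def)
  qed
  moreover have "cpm E a b = 0" using c1[OF a b] a b disj by (auto simp: cpm_def adj_def)
  ultimately show ?thesis unfolding charpoly_detS by simp
qed

lemma good_graph:
  assumes "simple_graph V E" "v \<in> V"
  shows "goodW (charpoly V E) (charpoly (V - {v}) E)"
  unfolding goodW_def using T4_graph[OF assms] by blast

lemma zero_above_pole_unred:
  fixes P Q :: "real poly"
  assumes "P \<noteq> 0" "Q \<noteq> 0" "goodW P Q" "rat_pole P Q \<mu>"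
  shows "\<exists>z>\<mu>. order z Q < order z P"
proof -
  note r = red_facts[OF assms(1,2)]
  have "poly (Q div gcd P Q) \<mu> = 0" using red_pole_iff[OF assms(1,2)] assms(4) by simp
  then obtain z where "z > \<mu>" "poly (P div gcd P Q) z = 0"
    using zero_above_poles[OF red_good[OF assms(1,2,3)] r(3) r(6)] by blast
  then show ?thesis using red_zero_iff[OF assms(1,2)] by blast
qed

definition ok :: "nat \<Rightarrow> (nat \<Rightarrow> 'a set) \<Rightarrow> (nat \<Rightarrow> 'a \<Rightarrow> 'a \<Rightarrow> bool) \<Rightarrow> (nat \<Rightarrow> 'a) \<Rightarrow> bool" where
  "ok n V E r \<longleftrightarrow> n \<ge> 1 \<and> (\<forall>i\<in>{1..n}. rooted_graph (V i) (E i) (r i))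
     \<and> (\<forall>i\<in>{1..n}. \<forall>j\<in>{1..n}. i \<noteq> j \<longrightarrow> V i \<inter> V j = {})"

lemma mem_dpath_V: "x \<in> dpath_V n V \<longleftrightarrow> (\<exists>i\<in>{1..n}. x \<in> V i)"
  by (simp add: dpath_V_def)

lemma ok_facts:
  assumes "ok n V E r"
  shows "\<And>i u w. i \<in> {1..n} \<Longrightarrow> E i u w \<Longrightarrow> u \<in> V i \<and> w \<in> V i"
    and "\<And>i. i \<in> {1..n} \<Longrightarrow> r i \<in> V i"
    and "\<And>i j x. i \<in> {1..n} \<Longrightarrow> j \<in> {1..n} \<Longrightarrow> x \<in> V i \<Longrightarrow> x \<in> V j \<Longrightarrow> i = j"
    and "\<And>i. i \<in> {1..n} \<Longrightarrow> simple_graph (V i) (E i)"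
    and "n \<ge> 1"
  using assms unfolding ok_def rooted_graph_def simple_graph_def by blast+

lemma ok_shift:
  assumes "ok (Suc n) V E r" "n \<ge> 1"
  shows "ok n (\<lambda>i. V (Suc i)) (\<lambda>i. E (Suc i)) (\<lambda>i. r (Suc i))"
  using assms unfolding ok_def by auto

lemma dpath_simple:
  assumes ok: "ok n V E r"
  shows "simple_graph (dpath_V n V) (dpath_E n E r)" "r 1 \<in> dpath_V n V"
proof -
  note f = ok_facts[OF ok]
  show "r 1 \<in> dpath_V n V" unfolding mem_dpath_V using f(2,5) by force
  have fin: "finite (dpath_V n V)" unfolding dpath_V_def
    using f(4) by (auto simp: simple_graph_def)
  have inV: "u \<in> dpath_V n V \<and> w \<in> dpath_V n V" if "dpath_E n E r u w" for u w
  proof -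
    from that consider (a) i where "i \<in> {1..n}" "E i u w"
      | (b) i where "1 \<le> i" "i < n" "(u = r i \<and> w = r (Suc i)) \<or> (u = r (Suc i) \<and> w = r i)"
      unfolding dpath_E_def by blast
    then show ?thesis
    proof cases
      case a then show ?thesis using f(1)[OF a] unfolding mem_dpath_V by blast
    next
      case b
      then have "r i \<in> dpath_V n V" "r (Suc i) \<in> dpath_V n V"
        unfolding mem_dpath_V using f(2)[of i] f(2)[of "Suc i"] by auto
      then show ?thesis using b(3) by auto
    qed
  qed
  have sym: "dpath_E n E r w u" if "dpath_E n E r u w" for u w
  proof -
    from that consider (a) i where "i \<in> {1..n}" "E i u w"
      | (b) i where "1 \<le> i" "i < n" "(u = r i \<and> w = r (Suc i)) \<or> (u = r (Suc i) \<and> w = r i)"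
      unfolding dpath_E_def by blast
    then show ?thesis
    proof cases
      case a
      then have "E i w u" using f(4)[of i] unfolding simple_graph_def by blast
      then show ?thesis using a(1) unfolding dpath_E_def by blast
    next
      case b then show ?thesis unfolding dpath_E_def by blast
    qed
  qed
  have irr: "\<not> dpath_E n E r u u" for u
  proof
    assume "dpath_E n E r u u"
    then consider (a) i where "i \<in> {1..n}" "E i u u"
      | (b) i where "1 \<le> i" "i < n" "r i = r (Suc i)"
      unfolding dpath_E_def by (metis (no_types))
    then show False
    proof cases
      case a then show ?thesis using f(4)[of i] unfolding simple_graph_def by blast
    next
      case b
      have "i \<in> {1..n}" "Suc i \<in> {1..n}" using b by auto
      then have "i = Suc i" using f(3) f(2) b(3) by metis
      then show ?thesis by simp
    qed
  qed
  show "simple_graph (dpath_V n V) (dpath_E n E r)"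
    unfolding simple_graph_def using fin inV sym irr by blast
qed

lemma dpath_decomp:
  assumes ok: "ok (Suc (Suc m)) V E r"
  shows "dpath_V (Suc (Suc m)) V = V 1 \<union> dpath_V (Suc m) (\<lambda>i. V (Suc i))" (is ?A)
    and "V 1 \<inter> dpath_V (Suc m) (\<lambda>i. V (Suc i)) = {}" (is ?B)
    and "r 2 \<in> dpath_V (Suc m) (\<lambda>i. V (Suc i))" (is ?C)
    and "\<And>u w. u \<in> V 1 \<Longrightarrow> w \<in> V 1 \<Longrightarrow> dpath_E (Suc (Suc m)) E r u w = E 1 u w"
    and "\<And>u w. u \<in> dpath_V (Suc m) (\<lambda>i. V (Suc i)) \<Longrightarrow> w \<in> dpath_V (Suc m) (\<lambda>i. V (Suc i)) \<Longrightarrow>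
           dpath_E (Suc (Suc m)) E r u w = dpath_E (Suc m) (\<lambda>i. E (Suc i)) (\<lambda>i. r (Suc i)) u w"
    and "\<And>u w. u \<in> V 1 \<Longrightarrow> w \<in> dpath_V (Suc m) (\<lambda>i. V (Suc i)) \<Longrightarrow>
           dpath_E (Suc (Suc m)) E r u w \<longleftrightarrow> (u = r 1 \<and> w = r 2)"
    and "\<And>u w. u \<in> dpath_V (Suc m) (\<lambda>i. V (Suc i)) \<Longrightarrow> w \<in> V 1 \<Longrightarrow>
           dpath_E (Suc (Suc m)) E r u w \<longleftrightarrow> (u = r 2 \<and> w = r 1)"
proof -
  note f = ok_facts[OF ok]
  let ?n = "Suc (Suc m)"
  have inE: "u \<in> V i \<and> w \<in> V i" if "i \<in> {1..?n}" "E i u w" for i u w using f(1) that by blast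
  have rin: "r i \<in> V i" if "i \<in> {1..?n}" for i using f(2) that by blast
  have uq: "i = j" if "i \<in> {1..?n}" "j \<in> {1..?n}" "x \<in> V i" "x \<in> V j" for i j x using f(3) that by blast
  have memV': "x \<in> dpath_V (Suc m) (\<lambda>i. V (Suc i)) \<longleftrightarrow> (\<exists>i\<in>{2..?n}. x \<in> V i)" for x
  proof
    assume "x \<in> dpath_V (Suc m) (\<lambda>i. V (Suc i))"
    then obtain i where "i \<in> {1..Suc m}" "x \<in> V (Suc i)" unfolding mem_dpath_V by blast
    then show "\<exists>i\<in>{2..?n}. x \<in> V i" by (intro bexI[of _ "Suc i"]) auto
  next
    assume "\<exists>i\<in>{2..?n}. x \<in> V i"
    then obtain i where i: "i \<in> {2..?n}" "x \<in> V i" by blast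
    then have "i - 1 \<in> {1..Suc m}" "x \<in> V (Suc (i - 1))" by auto
    then show "x \<in> dpath_V (Suc m) (\<lambda>i. V (Suc i))" unfolding mem_dpath_V by blast
  qed
  have not1: "x \<notin> V 1" if "x \<in> V i" "i \<in> {2..?n}" for x i
  proof
    assume "x \<in> V 1"
    then have "i = 1" using uq[of i 1 x] that by auto
    then show False using that by simp
  qed
  show ?A
  proof (rule Set.set_eqI)
    fix x
    show "x \<in> dpath_V ?n V \<longleftrightarrow> x \<in> V 1 \<union> dpath_V (Suc m) (\<lambda>i. V (Suc i))"
    proof
      assume "x \<in> dpath_V ?n V"
      then obtain i where i: "i \<in> {1..?n}" "x \<in> V i" unfolding mem_dpath_V by blast
      show "x \<in> V 1 \<union> dpath_V (Suc m) (\<lambda>i. V (Suc i))"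
      proof (cases "i = 1")
        case True then show ?thesis using i by simp
      next
        case False
        then have "i \<in> {2..?n}" using i by auto
        then show ?thesis using i memV' by blast
      qed
    next
      assume x: "x \<in> V 1 \<union> dpath_V (Suc m) (\<lambda>i. V (Suc i))"
      show "x \<in> dpath_V ?n V"
      proof (cases "x \<in> V 1")
        case True then show ?thesis unfolding mem_dpath_V by (intro bexI[of _ 1]) auto
      next
        case False
        then obtain i where "i \<in> {2..?n}" "x \<in> V i" using x memV' by blast
        then show ?thesis unfolding mem_dpath_V by (intro bexI[of _ i]) auto
      qed
    qed
  qed
  show ?B using not1 memV' by blast
  show ?C unfolding memV' using rin[of 2] by auto
  show "dpath_E ?n E r u w = E 1 u w" if u: "u \<in> V 1" and w: "w \<in> V 1" for u w
  proof
    assume "dpath_E ?n E r u w"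
    then consider (a) i where "i \<in> {1..?n}" "E i u w"
      | (b) i where "1 \<le> i" "i < ?n" "u = r i" "w = r (Suc i)"
      | (c) i where "1 \<le> i" "i < ?n" "u = r (Suc i)" "w = r i"
      unfolding dpath_E_def by blast
    then show "E 1 u w"
    proof cases
      case a
      then have "i = 1" using uq[of i 1 u] inE[of i u w] u by auto
      then show ?thesis using a by simp
    next
      case b
      then have "Suc i \<in> {2..?n}" "w \<in> V (Suc i)" using rin[of "Suc i"] by auto
      then show ?thesis using not1 w by blast
    next
      case c
      then have "Suc i \<in> {2..?n}" "u \<in> V (Suc i)" using rin[of "Suc i"] by auto
      then show ?thesis using not1 u by blast
    qed
  next
    assume "E 1 u w"
    then show "dpath_E ?n E r u w" unfolding dpath_E_def by force
  qed
  show "dpath_E ?n E r u w = dpath_E (Suc m) (\<lambda>i. E (Suc i)) (\<lambda>i. r (Suc i)) u w"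
    if u: "u \<in> dpath_V (Suc m) (\<lambda>i. V (Suc i))" and w: "w \<in> dpath_V (Suc m) (\<lambda>i. V (Suc i))" for u w
  proof
    have u1: "u \<notin> V 1" and w1: "w \<notin> V 1" using u w memV' not1 by blast+
    assume "dpath_E ?n E r u w"
    then consider (a) i where "i \<in> {1..?n}" "E i u w"
      | (b) i where "1 \<le> i" "i < ?n" "u = r i" "w = r (Suc i)"
      | (c) i where "1 \<le> i" "i < ?n" "u = r (Suc i)" "w = r i"
      unfolding dpath_E_def by blast
    then show "dpath_E (Suc m) (\<lambda>i. E (Suc i)) (\<lambda>i. r (Suc i)) u w"
    proof cases
      case a
      then have "i \<noteq> 1" using inE[of i u w] u1 by auto
      then have "i - 1 \<in> {1..Suc m}" "E (Suc (i - 1)) u w" using a by auto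
      then show ?thesis unfolding dpath_E_def by blast
    next
      case b
      then have "i \<noteq> 1" using u1 rin[of 1] by auto
      then have "1 \<le> i - 1" "i - 1 < Suc m" "u = r (Suc (i - 1))" "w = r (Suc (Suc (i - 1)))" using b by auto
      then show ?thesis unfolding dpath_E_def by blast
    next
      case c
      then have "i \<noteq> 1" using w1 rin[of 1] by auto
      then have "1 \<le> i - 1" "i - 1 < Suc m" "u = r (Suc (Suc (i - 1)))" "w = r (Suc (i - 1))" using c by auto
      then show ?thesis unfolding dpath_E_def by blast
    qed
  next
    assume "dpath_E (Suc m) (\<lambda>i. E (Suc i)) (\<lambda>i. r (Suc i)) u w"
    then consider (a) i where "i \<in> {1..Suc m}" "E (Suc i) u w"
      | (b) i where "1 \<le> i" "i < Suc m" "u = r (Suc i)" "w = r (Suc (Suc i))"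
      | (c) i where "1 \<le> i" "i < Suc m" "u = r (Suc (Suc i))" "w = r (Suc i)"
      unfolding dpath_E_def by blast
    then show "dpath_E ?n E r u w"
    proof cases
      case a
      then have "Suc i \<in> {1..?n}" by auto
      then show ?thesis using a unfolding dpath_E_def by blast
    next
      case b
      then have "1 \<le> Suc i" "Suc i < ?n" by auto
      then show ?thesis using b unfolding dpath_E_def by blast
    next
      case c
      then have "1 \<le> Suc i" "Suc i < ?n" by auto
      then show ?thesis using c unfolding dpath_E_def by blast
    qed
  qed
  show "dpath_E ?n E r u w \<longleftrightarrow> (u = r 1 \<and> w = r 2)"
    if u: "u \<in> V 1" and w: "w \<in> dpath_V (Suc m) (\<lambda>i. V (Suc i))" for u w
  proof
    have w1: "w \<notin> V 1" using w memV' not1 by blast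
    assume "dpath_E ?n E r u w"
    then consider (a) i where "i \<in> {1..?n}" "E i u w"
      | (b) i where "1 \<le> i" "i < ?n" "u = r i" "w = r (Suc i)"
      | (c) i where "1 \<le> i" "i < ?n" "u = r (Suc i)" "w = r i"
      unfolding dpath_E_def by blast
    then show "u = r 1 \<and> w = r 2"
    proof cases
      case a
      then have "i = 1" using uq[of i 1 u] inE[of i u w] u by auto
      then show ?thesis using a inE[of i u w] w1 by auto
    next
      case b
      then have "i = 1" using uq[of i 1 u] rin[of i] u by auto
      then show ?thesis using b by (simp add: numeral_2_eq_2)
    next
      case c
      then have "Suc i \<in> {2..?n}" "u \<in> V (Suc i)" using rin[of "Suc i"] by auto
      then show ?thesis using not1 u by blast
    qed
  next
    assume "u = r 1 \<and> w = r 2"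
    then show "dpath_E ?n E r u w" unfolding dpath_E_def
      by (intro disjI2 exI[of _ 1]) (simp add: numeral_2_eq_2)
  qed
  show "dpath_E ?n E r u w \<longleftrightarrow> (u = r 2 \<and> w = r 1)"
    if u: "u \<in> dpath_V (Suc m) (\<lambda>i. V (Suc i))" and w: "w \<in> V 1" for u w
  proof
    have u1: "u \<notin> V 1" using u memV' not1 by blast
    assume "dpath_E ?n E r u w"
    then consider (a) i where "i \<in> {1..?n}" "E i u w"
      | (b) i where "1 \<le> i" "i < ?n" "u = r i" "w = r (Suc i)"
      | (c) i where "1 \<le> i" "i < ?n" "u = r (Suc i)" "w = r i"
      unfolding dpath_E_def by blast
    then show "u = r 2 \<and> w = r 1"
    proof cases
      case a
      then have "i = 1" using uq[of i 1 w] inE[of i u w] w by auto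
      then show ?thesis using a inE[of i u w] u1 by auto
    next
      case b
      then have "Suc i \<in> {2..?n}" "w \<in> V (Suc i)" using rin[of "Suc i"] by auto
      then show ?thesis using not1 w by blast
    next
      case c
      then have "i = 1" using uq[of i 1 w] rin[of i] w by auto
      then show ?thesis using c by (simp add: numeral_2_eq_2)
    qed
  next
    assume "u = r 2 \<and> w = r 1"
    then show "dpath_E ?n E r u w" unfolding dpath_E_def
      by (intro disjI2 exI[of _ 1]) (simp add: numeral_2_eq_2)
  qed
qed

lemma main_gen:
  assumes "ok (Suc m) V E r" "i \<in> {1..Suc m}" "alpha_pole (V i) (E i) (r i) lam"
  shows "\<exists>\<mu>\<ge>lam. alpha_pole (dpath_V (Suc m) V) (dpath_E (Suc m) E r) (r 1) \<mu>"
  using assms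
proof (induction m arbitrary: V E r i)
  case 0
  have i: "i = 1" using 0 by simp
  have dV: "dpath_V (Suc 0) V = V 1" by (simp add: dpath_V_def)
  have dE: "dpath_E (Suc 0) E r = E 1" by (intro ext) (simp add: dpath_E_def)
  show ?case using 0(3) unfolding i dV dE by blast
next
  case (Suc m)
  let ?n = "Suc (Suc m)"
  define V' where "V' = (\<lambda>i. V (Suc i))"
  define E' where "E' = (\<lambda>i. E (Suc i))"
  define r' where "r' = (\<lambda>i. r (Suc i))"
  have ok: "ok ?n V E r" by fact
  have ok': "ok (Suc m) V' E' r'" unfolding V'_def E'_def r'_def by (rule ok_shift[OF ok]) simp
  note dd = dpath_decomp[OF ok, folded V'_def E'_def r'_def]
  note f = ok_facts[OF ok]
  define S1 where "S1 = V 1"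
  define S2 where "S2 = dpath_V (Suc m) V'"
  define G where "G = dpath_E ?n E r"
  define G' where "G' = dpath_E (Suc m) E' r'"
  have sg1: "simple_graph S1 (E 1)" unfolding S1_def using f(4) by simp
  have r1: "r 1 \<in> S1" unfolding S1_def using f(2) by simp
  have sg2: "simple_graph S2 G'" and r2': "r' 1 \<in> S2"
    unfolding S2_def G'_def using dpath_simple[OF ok'] by auto
  have r2: "r 2 \<in> S2" using r2' unfolding r'_def by (simp add: numeral_2_eq_2)
  have fin1: "finite S1" using sg1 by (simp add: simple_graph_def)
  have fin2: "finite S2" using sg2 by (simp add: simple_graph_def)
  have disj: "S1 \<inter> S2 = {}" unfolding S1_def S2_def using dd(2) .
  define P1 where "P1 = charpoly S1 (E 1)"
  define Q1 where "Q1 = charpoly (S1 - {r 1}) (E 1)"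
  define P2 where "P2 = charpoly S2 G'"
  define Q2 where "Q2 = charpoly (S2 - {r 2}) G'"
  have c1: "G u w \<longleftrightarrow> (u = r 1 \<and> w = r 2)" if "u \<in> S1" "w \<in> S2" for u w
    using dd(6) that unfolding S1_def S2_def G_def by blast
  have c2: "G u w \<longleftrightarrow> (u = r 2 \<and> w = r 1)" if "u \<in> S2" "w \<in> S1" for u w
    using dd(7) that unfolding S1_def S2_def G_def by blast
  have e1: "G u w = E 1 u w" if "u \<in> S1" "w \<in> S1" for u w
    using dd(4) that unfolding S1_def G_def by blast
  have e2: "G u w = G' u w" if "u \<in> S2" "w \<in> S2" for u w
    using dd(5) that unfolding S2_def G_def G'_def by blast
  have VV: "dpath_V ?n V = S1 \<union> S2" unfolding S1_def S2_def using dd(1) .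
  have hP: "charpoly (dpath_V ?n V) G = P1 * P2 - Q1 * Q2"
  proof -
    have "charpoly (S1 \<union> S2) G = charpoly S1 G * charpoly S2 G - charpoly (S1 - {r 1}) G * charpoly (S2 - {r 2}) G"
      by (rule charpoly_bridge[OF fin1 fin2 disj r1 r2 c1 c2])
    moreover have "charpoly S1 G = P1" unfolding P1_def by (rule charpoly_cong) (use e1 in auto)
    moreover have "charpoly (S1 - {r 1}) G = Q1" unfolding Q1_def by (rule charpoly_cong) (use e1 in auto)
    moreover have "charpoly S2 G = P2" unfolding P2_def by (rule charpoly_cong) (use e2 in auto)
    moreover have "charpoly (S2 - {r 2}) G = Q2" unfolding Q2_def by (rule charpoly_cong) (use e2 in auto)
    ultimately show ?thesis unfolding VV by simp
  qed
  have hQ: "charpoly (dpath_V ?n V - {r 1}) G = Q1 * P2"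
  proof -
    have VV': "dpath_V ?n V - {r 1} = (S1 - {r 1}) \<union> S2" unfolding VV using r1 disj by auto
    have "charpoly ((S1 - {r 1}) \<union> S2) G = charpoly (S1 - {r 1}) G * charpoly S2 G"
    proof (rule charpoly_union)
      show "finite (S1 - {r 1})" using fin1 by simp
      show "finite S2" by (rule fin2)
      show "(S1 - {r 1}) \<inter> S2 = {}" using disj by auto
      show "\<not> G u w" if "u \<in> S1 - {r 1}" "w \<in> S2" for u w using c1[of u w] that by auto
      show "\<not> G u w" if "u \<in> S2" "w \<in> S1 - {r 1}" for u w using c2[of u w] that by auto
    qed
    moreover have "charpoly (S1 - {r 1}) G = Q1" unfolding Q1_def by (rule charpoly_cong) (use e1 in auto)
    moreover have "charpoly S2 G = P2" unfolding P2_def by (rule charpoly_cong) (use e2 in auto)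
    ultimately show ?thesis unfolding VV' by simp
  qed
  have apG: "alpha_pole (dpath_V ?n V) (dpath_E ?n E r) (r 1) \<mu> \<longleftrightarrow> rat_pole (P1 * P2 - Q1 * Q2) (Q1 * P2) \<mu>" for \<mu>
    unfolding alpha_pole_def G_def[symmetric] hP hQ ..
  have nz: "P1 \<noteq> 0" "Q1 \<noteq> 0" "P2 \<noteq> 0" "Q2 \<noteq> 0"
    unfolding P1_def Q1_def P2_def Q2_def using fin1 fin2 by (simp_all add: charpoly_nz)
  have g1: "goodW P1 Q1" unfolding P1_def Q1_def by (rule good_graph[OF sg1 r1])
  have g2: "goodW P2 Q2" unfolding P2_def Q2_def by (rule good_graph[OF sg2 r2])
  show ?case
  proof (cases "i = 1")
    case True
    have "rat_pole P1 Q1 lam" using Suc.prems(3) unfolding True alpha_pole_def P1_def Q1_def S1_def .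
    then have "rat_pole (P1 * P2 - Q1 * Q2) (Q1 * P2) lam" using comb[OF nz g1 g2] by blast
    then show ?thesis unfolding apG by blast
  next
    case False
    then have i': "i - 1 \<in> {1..Suc m}" and ieq: "i = Suc (i - 1)" using Suc.prems(2) by auto
    have "alpha_pole (V' (i - 1)) (E' (i - 1)) (r' (i - 1)) lam"
      unfolding V'_def E'_def r'_def using Suc.prems(3) ieq by simp
    from Suc.IH[OF ok' i' this] obtain \<mu>' where mu': "\<mu>' \<ge> lam" "alpha_pole S2 G' (r' 1) \<mu>'"
      unfolding S2_def G'_def by blast
    have "rat_pole P2 Q2 \<mu>'" using mu'(2) unfolding alpha_pole_def P2_def Q2_def r'_def
      by (simp add: numeral_2_eq_2)
    then obtain z where z: "z > \<mu>'" "order z Q2 < order z P2"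
      using zero_above_pole_unred[OF nz(3,4) g2] by blast
    then have "rat_pole (P1 * P2 - Q1 * Q2) (Q1 * P2) z" using comb[OF nz g1 g2] by blast
    then show ?thesis unfolding apG using z mu' by (intro exI[of _ z]) auto
  qed
qed

theorem lemma8:
  fixes n :: nat and V :: "nat \<Rightarrow> 'a set" and E :: "nat \<Rightarrow> 'a \<Rightarrow> 'a \<Rightarrow> bool"
    and r :: "nat \<Rightarrow> 'a" and \<theta> :: real
  assumes "n \<ge> 1"
    and "\<forall>i\<in>{1..n}. rooted_graph (V i) (E i) (r i)"
    and "\<forall>i\<in>{1..n}. \<forall>j\<in>{1..n}. i \<noteq> j \<longrightarrow> V i \<inter> V j = {}"
    and "\<forall>\<mu>. alpha_pole (dpath_V n V) (dpath_E n E r) (r 1) \<mu> \<longrightarrow> \<mu> < \<theta>"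
  shows "\<forall>i\<in>{1..n}. \<forall>lam::real. lam \<ge> \<theta> \<longrightarrow> \<not> alpha_pole (V i) (E i) (r i) lam"
proof (intro ballI allI impI notI)
  fix i lam
  assume i: "i \<in> {1..n}" and lam: "lam \<ge> \<theta>" and ap: "alpha_pole (V i) (E i) (r i) lam"
  have ok: "ok n V E r" unfolding ok_def using assms(1-3) by blast
  have n: "n = Suc (n - 1)" using assms(1) by simp
  have "\<exists>\<mu>\<ge>lam. alpha_pole (dpath_V (Suc (n - 1)) V) (dpath_E (Suc (n - 1)) E r) (r 1) \<mu>"
    by (rule main_gen) (use ok i ap n in simp_all)
  then obtain \<mu> where "\<mu> \<ge> lam" "alpha_pole (dpath_V n V) (dpath_E n E r) (r 1) \<mu>"
    using n by auto
  then show False using assms(4) lam by force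
qed

end
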